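(* Consider the system on $\mathbb{R}^2$ \[ \dot x_1=-g_1(t)x_1+g(t)x_1^m-h_1(t)x_2^3,\qquad \dot x_2=h_2(t)x_1-g_2(t)x_2+\tilde g(t)x_2^n-b(t)x_1^2x_2+d(t), \] where $g,\tilde g\in C(\mathbb{R}_{\geq0};\mathbb{R}_{\geq0})$, $b\in C(\mathbb{R}_{\geq0};\mathbb{R}_{>0})$, $h_1\in C^1(\mathbb{R}_{\geq0};\mathbb{R}_{\geq0})$ satisfies $0\leq h_1(t)\leq M$ and $h_1'(t)\leq h_1(t)$ for all $t\geq0$ with a constant $M>0$, $m>3$ and $n>1$ are integers, $g_1,g_2,h_2\in C(\mathbb{R}_{\geq0};\mathbb{R}_{\geq0})$ satisfy $g_1(t)\geq\max\{g(t),\tilde g(t)\}$ for all $t\geq0$, $\lim_{t\to\infty}\int_0^t g_1(\tau)\,\mathrm{d}\tau=+\infty$, $g_2(t)\geq 1+g_1(t)$ and $h_2(t)=\frac{h_1(t)}{1+h_1(t)}$ for all $t\geq0$, and the disturbance $d$ satisfies $d\in L^4(0,T)$ for every $T>0$. Then this system is LiISS: there exist $R>0$, $\gamma_0,\gamma\in\mathcal{K}$, $\sigma_0,\sigma\in\mathcal{K}_\infty$, $\beta\in\mathcal{KL}$ such that for every initial state $x(0)=x_0\in\mathbb{R}^2$ and disturbance $d$ with $|x_0|+\sigma_0\big(\int_0^t\gamma_0(|d(s)|)\,\mathrm{d}s\big)\leq R$ for all $t>0$, the solution $x=(x_1,x_2)^\top$ satisfies \[ |x(t)|\leq\beta(|x_0|,t)+\sigma\Big(\int_0^t\gamma(|d(s)|)\,\mathrm{d}s\Big),\quad\forall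 t\geq0. \]
   Context: $|\cdot|$ is the Euclidean norm on $\mathbb{R}^2$. $\mathcal{K}$ = continuous strictly increasing $\gamma:\mathbb{R}_{\geq0}\to\mathbb{R}_{\geq0}$ with $\gamma(0)=0$; $\mathcal{K}_\infty$ = unbounded elements of $\mathcal{K}$; $\mathcal{KL}$ = continuous $\beta:\mathbb{R}_{\geq0}^2\to\mathbb{R}_{\geq0}$ with $\beta(\cdot,t)\in\mathcal{K}$ for each $t\geq0$ and $\beta(r,\cdot)$ continuous, strictly decreasing and tending to $0$ for each $r>0$. *)

theory Defs
  imports "HOL-Analysis.Analysis"
begin

definition class_K :: "(real \<Rightarrow> real) \<Rightarrow> bool" where
  "class_K \<gamma> \<longleftrightarrow> continuous_on {0..} \<gamma> \<and> strict_mono_on {0..} \<gamma> \<and> \<gamma> 0 = 0"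

definition class_Kinf :: "(real \<Rightarrow> real) \<Rightarrow> bool" where
  "class_Kinf \<gamma> \<longleftrightarrow> class_K \<gamma> \<and> (\<forall>M. \<exists>r\<ge>0. \<gamma> r > M)"

definition class_KL :: "(real \<Rightarrow> real \<Rightarrow> real) \<Rightarrow> bool" where
  "class_KL \<beta> \<longleftrightarrow>
     continuous_on ({0..} \<times> {0..}) (\<lambda>(r, t). \<beta> r t) \<and>
     (\<forall>t\<ge>0. class_K (\<lambda>r. \<beta> r t)) \<and>
     (\<forall>r>0. continuous_on {0..} (\<beta> r) \<and>
            (\<forall>s t. 0 \<le> s \<longrightarrow> s < t \<longrightarrow> \<beta> r t < \<beta> r s) \<and>
            (\<beta> r \<longlongrightarrow> 0) at_top)"

text \<open>Caratheodory solution on [0,T] of x' = F(t,x), x(0) = x0, in integral form,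
  componentwise on R^2 (represented as real \<times> real; its norm is the Euclidean norm).\<close>

definition car_solution ::
  "(real \<Rightarrow> real \<times> real \<Rightarrow> real \<times> real) \<Rightarrow> real \<times> real \<Rightarrow> real \<Rightarrow> (real \<Rightarrow> real \<times> real) \<Rightarrow> bool" where
  "car_solution F x0 T x \<longleftrightarrow>
     continuous_on {0..T} x \<and> x 0 = x0 \<and>
     (\<forall>t\<in>{0..T}.
        set_integrable lborel {0..t} (\<lambda>s. fst (F s (x s))) \<and>
        set_integrable lborel {0..t} (\<lambda>s. snd (F s (x s))) \<and>
        fst (x t) = fst x0 + (LINT s:{0..t}|lborel. fst (F s (x s))) \<and>
        snd (x t) = snd x0 + (LINT s:{0..t}|lborel. snd (F s (x s))))"

end

theory Submission
  imports Defs
begin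

lemma dist3_le:
  fixes t y z t' y' z' :: real
  shows "dist (t,y,z) (t',y',z') \<le> \<bar>t - t'\<bar> + \<bar>y - y'\<bar> + \<bar>z - z'\<bar>"
proof -
  have 1: "dist (y,z) (y',z') \<le> \<bar>y - y'\<bar> + \<bar>z - z'\<bar>"
    using sqrt_sum_squares_le_sum_abs[of "dist y y'" "dist z z'"]
    by (simp add: dist_Pair_Pair dist_real_def)
  have "dist (t,y,z) (t',y',z') \<le> \<bar>dist t t'\<bar> + \<bar>dist (y,z) (y',z')\<bar>"
    unfolding dist_Pair_Pair[of t] by (rule sqrt_sum_squares_le_sum_abs)
  then show ?thesis using 1 by (simp add: dist_real_def)
qed

lemma unif3:
  fixes P :: "real \<Rightarrow> real \<Rightarrow> real \<Rightarrow> real"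
  assumes cP: "continuous_on ({0..T} \<times> UNIV) (\<lambda>(t,y,z). P t y z)" and e: "e > 0"
  shows "\<exists>\<eta>>0. \<forall>t y z t' y' z'. t\<in>{0..T} \<longrightarrow> t'\<in>{0..T} \<longrightarrow> \<bar>y\<bar> \<le> B \<longrightarrow> \<bar>z\<bar> \<le> B
     \<longrightarrow> \<bar>y'\<bar> \<le> B \<longrightarrow> \<bar>z'\<bar> \<le> B \<longrightarrow> \<bar>t-t'\<bar> + \<bar>y-y'\<bar> + \<bar>z-z'\<bar> < \<eta>
     \<longrightarrow> \<bar>P t y z - P t' y' z'\<bar> < e"
proof -
  let ?K = "{0..T} \<times> ({-B..B} \<times> {-B..B})"
  have "compact ?K" by (intro compact_Times compact_Icc)
  moreover have "continuous_on ?K (\<lambda>(t,y,z). P t y z)" using cP by (rule continuous_on_subset) auto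
  ultimately have "uniformly_continuous_on ?K (\<lambda>(t,y,z). P t y z)" by (intro compact_uniformly_continuous)
  then obtain \<eta> where \<eta>: "\<eta>>0" "\<forall>x\<in>?K. \<forall>x'\<in>?K. dist x' x < \<eta> \<longrightarrow>
      dist ((\<lambda>(t,y,z). P t y z) x') ((\<lambda>(t,y,z). P t y z) x) < e"
    unfolding uniformly_continuous_on_def using e by metis
  show ?thesis
  proof (intro exI[of _ \<eta>] conjI allI impI)
    fix t y z t' y' z' :: real
    assume h: "t\<in>{0..T}" "t'\<in>{0..T}" "\<bar>y\<bar> \<le> B" "\<bar>z\<bar> \<le> B" "\<bar>y'\<bar> \<le> B" "\<bar>z'\<bar> \<le> B"
      "\<bar>t-t'\<bar> + \<bar>y-y'\<bar> + \<bar>z-z'\<bar> < \<eta>"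
    have "dist (t,y,z) (t',y',z') < \<eta>" using dist3_le[of t y z t' y' z'] h(7) by linarith
    moreover have "(t,y,z) \<in> ?K" "(t',y',z') \<in> ?K" using h by auto
    ultimately show "\<bar>P t y z - P t' y' z'\<bar> < e"
      using \<eta>(2) by (force simp: dist_real_def)
  qed (fact \<eta>)
qed

lemma eps_zero:
  fixes X Y :: real
  assumes "\<And>e. e > 0 \<Longrightarrow> \<bar>X\<bar> \<le> e * Y" "Y \<ge> 0"
  shows "X = 0"
proof (rule ccontr)
  assume "X \<noteq> 0"
  define e where "e = \<bar>X\<bar> / (2 * (Y + 1))"
  have e: "e > 0" using \<open>X \<noteq> 0\<close> assms(2) by (simp add: e_def)
  have "e * Y < \<bar>X\<bar>"
  proof -
    have "e * Y \<le> e * (Y + 1)" using e by simp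
    also have "\<dots> = \<bar>X\<bar> / 2" using assms(2) by (simp add: e_def field_simps)
    also have "\<dots> < \<bar>X\<bar>" using \<open>X \<noteq> 0\<close> by simp
    finally show ?thesis .
  qed
  with assms(1)[OF e] show False by linarith
qed

lemma chain_steps:
  fixes E \<mu> :: "real \<Rightarrow> real"
  assumes loc: "\<And>e. e > 0 \<Longrightarrow> \<exists>\<delta>>0. \<forall>s t. 0 \<le> s \<longrightarrow> s \<le> t \<longrightarrow> t \<le> T \<longrightarrow> t - s < \<delta>
        \<longrightarrow> \<bar>E t - E s\<bar> \<le> e * (\<mu> t - \<mu> s)"
    and mono: "\<And>s t. 0 \<le> s \<Longrightarrow> s \<le> t \<Longrightarrow> t \<le> T \<Longrightarrow> \<mu> s \<le> \<mu> t"
    and t: "0 \<le> t" "t \<le> T"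
  shows "E t = E 0"
proof -
  have "\<bar>E t - E 0\<bar> \<le> e * (\<mu> t - \<mu> 0)" if e: "e > 0" for e
  proof -
    obtain \<delta> where \<delta>: "\<delta>>0" "\<forall>s t. 0 \<le> s \<longrightarrow> s \<le> t \<longrightarrow> t \<le> T \<longrightarrow> t - s < \<delta>
        \<longrightarrow> \<bar>E t - E s\<bar> \<le> e * (\<mu> t - \<mu> s)" using loc[OF e] by blast
    have "\<forall>t. 0 \<le> t \<and> t \<le> T \<and> t \<le> real k * (\<delta>/2) \<longrightarrow> \<bar>E t - E 0\<bar> \<le> e * (\<mu> t - \<mu> 0)" for k
    proof (induction k)
      case 0
      then show ?case by auto
    next
      case (Suc k)
      show ?case
      proof (intro allI impI)
        fix t assume t: "0 \<le> t \<and> t \<le> T \<and> t \<le> real (Suc k) * (\<delta>/2)"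
        define s where "s = max 0 (t - \<delta>/2)"
        have s: "0 \<le> s" "s \<le> t" "t - s < \<delta>" "s \<le> real k * (\<delta>/2)"
          using t \<delta>(1) by (auto simp: s_def algebra_simps max_def)
        have 1: "\<bar>E s - E 0\<bar> \<le> e * (\<mu> s - \<mu> 0)" using Suc.IH s t by auto
        have 2: "\<bar>E t - E s\<bar> \<le> e * (\<mu> t - \<mu> s)" using \<delta>(2) s t by auto
        have "e * (\<mu> t - \<mu> s) + e * (\<mu> s - \<mu> 0) = e * (\<mu> t - \<mu> 0)" by (simp add: algebra_simps)
        then show "\<bar>E t - E 0\<bar> \<le> e * (\<mu> t - \<mu> 0)" using 1 2 by linarith
      qed
    qed
    moreover obtain k where "t / (\<delta>/2) \<le> real k" using real_arch_simple by blast
    then have "t \<le> real k * (\<delta>/2)" using \<delta>(1) by (simp add: field_simps)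
    ultimately show ?thesis using t by blast
  qed
  moreover have "\<mu> t - \<mu> 0 \<ge> 0" using mono[of 0 t] t by simp
  ultimately have "E t - E 0 = 0" by (intro eps_zero) auto
  then show ?thesis by simp
qed

lemma abs_int_prod:
  fixes q w :: "real \<Rightarrow> real"
  assumes "continuous_on {a..b} q" "w absolutely_integrable_on {a..b}"
  shows "(\<lambda>x. q x * w x) absolutely_integrable_on {a..b}"
proof (rule absolutely_integrable_bounded_measurable_product_real)
  show "q \<in> borel_measurable (lebesgue_on {a..b})"
    using assms(1) by (rule continuous_imp_measurable_on_sets_lebesgue) simp
  show "bounded (q ` {a..b})"
    using assms(1) by (intro compact_imp_bounded compact_continuous_image) auto
qed (use assms in auto)

lemma abs_int_parts:
  fixes w :: "real \<Rightarrow> real"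
  assumes "w absolutely_integrable_on S"
  shows "w integrable_on S" "(\<lambda>x. \<bar>w x\<bar>) integrable_on S"
  using assms unfolding absolutely_integrable_on_def by auto

lemma int_abs_bound:
  fixes f g :: "real \<Rightarrow> real"
  assumes "f integrable_on S" "g integrable_on S" "\<And>x. x \<in> S \<Longrightarrow> \<bar>f x\<bar> \<le> g x"
  shows "\<bar>integral S f\<bar> \<le> integral S g"
  using integral_norm_bound_integral[of f S g] assms by simp

lemma chain3:
  fixes F Pt Pa Pc :: "real \<Rightarrow> real \<Rightarrow> real \<Rightarrow> real" and a c w1 w2 :: "real \<Rightarrow> real" and T :: real
  assumes ca: "continuous_on {0..T} a" and cc: "continuous_on {0..T} c"
  and w1: "w1 absolutely_integrable_on {0..T}" and w2: "w2 absolutely_integrable_on {0..T}"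
  and a_eq: "\<And>t. t \<in> {0..T} \<Longrightarrow> a t = a 0 + integral {0..t} w1"
  and c_eq: "\<And>t. t \<in> {0..T} \<Longrightarrow> c t = c 0 + integral {0..t} w2"
  and dt: "\<And>t y z. t \<in> {0..T} \<Longrightarrow> ((\<lambda>t. F t y z) has_real_derivative Pt t y z) (at t within {0..T})"
  and dy: "\<And>t y z. t \<in> {0..T} \<Longrightarrow> ((\<lambda>y. F t y z) has_real_derivative Pa t y z) (at y)"
  and dz: "\<And>t y z. t \<in> {0..T} \<Longrightarrow> ((\<lambda>z. F t y z) has_real_derivative Pc t y z) (at z)"
  and cPt: "continuous_on ({0..T} \<times> UNIV) (\<lambda>(t,y,z). Pt t y z)"
  and cPa: "continuous_on ({0..T} \<times> UNIV) (\<lambda>(t,y,z). Pa t y z)"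
  and cPc: "continuous_on ({0..T} \<times> UNIV) (\<lambda>(t,y,z). Pc t y z)"
  and t: "t \<in> {0..T}"
  shows "F t (a t) (c t) = F 0 (a 0) (c 0) +
     integral {0..t} (\<lambda>s. Pt s (a s) (c s) + Pa s (a s) (c s) * w1 s + Pc s (a s) (c s) * w2 s)"
proof -
  define qt where "qt = (\<lambda>s. Pt s (a s) (c s))"
  define qa where "qa = (\<lambda>s. Pa s (a s) (c s))"
  define qc where "qc = (\<lambda>s. Pc s (a s) (c s))"
  define L where "L = (\<lambda>s. qt s + qa s * w1 s + qc s * w2 s)"
  have cx: "continuous_on {0..T} (\<lambda>s. (s, a s, c s))" by (intro continuous_intros ca cc)
  have cqt: "continuous_on {0..T} qt"
  proof -
    have "continuous_on {0..T} (\<lambda>x. (\<lambda>(t,y,z). Pt t y z) (x, a x, c x))"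
      by (rule continuous_on_compose2[OF cPt cx]) auto
    then show ?thesis unfolding qt_def by simp
  qed
  have cqa: "continuous_on {0..T} qa"
  proof -
    have "continuous_on {0..T} (\<lambda>x. (\<lambda>(t,y,z). Pa t y z) (x, a x, c x))"
      by (rule continuous_on_compose2[OF cPa cx]) auto
    then show ?thesis unfolding qa_def by simp
  qed
  have cqc: "continuous_on {0..T} qc"
  proof -
    have "continuous_on {0..T} (\<lambda>x. (\<lambda>(t,y,z). Pc t y z) (x, a x, c x))"
      by (rule continuous_on_compose2[OF cPc cx]) auto
    then show ?thesis unfolding qc_def by simp
  qed
  have iw1: "w1 integrable_on {0..T}" "(\<lambda>x. \<bar>w1 x\<bar>) integrable_on {0..T}"
    using abs_int_parts[OF w1] .
  have iw2: "w2 integrable_on {0..T}" "(\<lambda>x. \<bar>w2 x\<bar>) integrable_on {0..T}"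
    using abs_int_parts[OF w2] .
  have iqt: "qt integrable_on {0..T}" using cqt by (rule integrable_continuous_interval)
  have iqa: "(\<lambda>s. qa s * w1 s) integrable_on {0..T}"
    using abs_int_parts(1)[OF abs_int_prod[OF cqa w1]] .
  have iqc: "(\<lambda>s. qc s * w2 s) integrable_on {0..T}"
    using abs_int_parts(1)[OF abs_int_prod[OF cqc w2]] .
  have iL: "L integrable_on {0..T}" unfolding L_def
    by (intro integrable_add iqt iqa iqc)
  have sub: "f integrable_on {u..v}" if "f integrable_on {0..T}" "0 \<le> u" "v \<le> T" for f :: "real \<Rightarrow> real" and u v
    using integrable_on_subinterval[OF that(1)] that(2,3) by auto
  have comb: "integral {0..v} f - integral {0..u} f = integral {u..v} f"
    if "f integrable_on {0..T}" "0 \<le> u" "u \<le> v" "v \<le> T" for f :: "real \<Rightarrow> real" and u v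
    using Henstock_Kurzweil_Integration.integral_combine[where a=0 and c=u and b=v and f=f] sub[OF that(1), where u=0 and v=v] that by auto
  obtain B where B: "\<And>s. s \<in> {0..T} \<Longrightarrow> \<bar>a s\<bar> \<le> B \<and> \<bar>c s\<bar> \<le> B"
  proof -
    have "bounded (a ` {0..T})" "bounded (c ` {0..T})"
      using ca cc by (auto intro!: compact_imp_bounded compact_continuous_image)
    then obtain B1 B2 where "\<forall>x\<in>a ` {0..T}. norm x \<le> B1" "\<forall>x\<in>c ` {0..T}. norm x \<le> B2"
      unfolding bounded_iff by blast
    then have "\<And>s. s \<in> {0..T} \<Longrightarrow> \<bar>a s\<bar> \<le> max B1 B2 \<and> \<bar>c s\<bar> \<le> max B1 B2"
    proof -
      fix s assume s: "s \<in> {0..T}"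
      assume h: "\<forall>x\<in>a ` {0..T}. norm x \<le> B1" "\<forall>x\<in>c ` {0..T}. norm x \<le> B2"
      have "norm (a s) \<le> B1" "norm (c s) \<le> B2" using h s by auto
      then show "\<bar>a s\<bar> \<le> max B1 B2 \<and> \<bar>c s\<bar> \<le> max B1 B2" by auto
    qed
    then show ?thesis using that by blast
  qed
  define E where "E = (\<lambda>t. F t (a t) (c t) - integral {0..t} L)"
  define \<mu> where "\<mu> = (\<lambda>t. t + integral {0..t} (\<lambda>x. \<bar>w1 x\<bar>) + integral {0..t} (\<lambda>x. \<bar>w2 x\<bar>))"
  have mono: "\<mu> s \<le> \<mu> t" if "0 \<le> s" "s \<le> t" "t \<le> T" for s t
  proof -
    have "integral {0..s} (\<lambda>x. \<bar>w1 x\<bar>) \<le> integral {0..t} (\<lambda>x. \<bar>w1 x\<bar>)"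
      using that by (intro integral_subset_le sub[OF iw1(2)]) auto
    moreover have "integral {0..s} (\<lambda>x. \<bar>w2 x\<bar>) \<le> integral {0..t} (\<lambda>x. \<bar>w2 x\<bar>)"
      using that by (intro integral_subset_le sub[OF iw2(2)]) auto
    ultimately show ?thesis unfolding \<mu>_def using that by linarith
  qed
  have loc: "\<exists>\<delta>>0. \<forall>s t. 0 \<le> s \<longrightarrow> s \<le> t \<longrightarrow> t \<le> T \<longrightarrow> t - s < \<delta>
        \<longrightarrow> \<bar>E t - E s\<bar> \<le> e * (\<mu> t - \<mu> s)" if e: "e > 0" for e
  proof -
    obtain \<eta>1 where \<eta>1: "\<eta>1>0" "\<forall>t y z t' y' z'. t\<in>{0..T} \<longrightarrow> t'\<in>{0..T} \<longrightarrow> \<bar>y\<bar> \<le> B \<longrightarrow> \<bar>z\<bar> \<le> B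
     \<longrightarrow> \<bar>y'\<bar> \<le> B \<longrightarrow> \<bar>z'\<bar> \<le> B \<longrightarrow> \<bar>t-t'\<bar> + \<bar>y-y'\<bar> + \<bar>z-z'\<bar> < \<eta>1
     \<longrightarrow> \<bar>Pt t y z - Pt t' y' z'\<bar> < e" using unif3[OF cPt e] by blast
    obtain \<eta>2 where \<eta>2: "\<eta>2>0" "\<forall>t y z t' y' z'. t\<in>{0..T} \<longrightarrow> t'\<in>{0..T} \<longrightarrow> \<bar>y\<bar> \<le> B \<longrightarrow> \<bar>z\<bar> \<le> B
     \<longrightarrow> \<bar>y'\<bar> \<le> B \<longrightarrow> \<bar>z'\<bar> \<le> B \<longrightarrow> \<bar>t-t'\<bar> + \<bar>y-y'\<bar> + \<bar>z-z'\<bar> < \<eta>2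
     \<longrightarrow> \<bar>Pa t y z - Pa t' y' z'\<bar> < e" using unif3[OF cPa e] by blast
    obtain \<eta>3 where \<eta>3: "\<eta>3>0" "\<forall>t y z t' y' z'. t\<in>{0..T} \<longrightarrow> t'\<in>{0..T} \<longrightarrow> \<bar>y\<bar> \<le> B \<longrightarrow> \<bar>z\<bar> \<le> B
     \<longrightarrow> \<bar>y'\<bar> \<le> B \<longrightarrow> \<bar>z'\<bar> \<le> B \<longrightarrow> \<bar>t-t'\<bar> + \<bar>y-y'\<bar> + \<bar>z-z'\<bar> < \<eta>3
     \<longrightarrow> \<bar>Pc t y z - Pc t' y' z'\<bar> < e" using unif3[OF cPc e] by blast
    define \<eta> where "\<eta> = min \<eta>1 (min \<eta>2 \<eta>3)"
    have \<eta>: "\<eta> > 0" "\<eta> \<le> \<eta>1" "\<eta> \<le> \<eta>2" "\<eta> \<le> \<eta>3" using \<eta>1 \<eta>2 \<eta>3 by (auto simp: \<eta>_def)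
    have ua: "uniformly_continuous_on {0..T} a" and uc: "uniformly_continuous_on {0..T} c"
      using ca cc by (auto intro: compact_uniformly_continuous)
    have h4: "\<eta>/4 > 0" using \<eta> by simp
    obtain da where da: "da > 0" "\<forall>x\<in>{0..T}. \<forall>x'\<in>{0..T}. dist x' x < da \<longrightarrow> dist (a x') (a x) < \<eta>/4"
      using ua[unfolded uniformly_continuous_on_def, rule_format, OF h4] by blast
    obtain dc where dc: "dc > 0" "\<forall>x\<in>{0..T}. \<forall>x'\<in>{0..T}. dist x' x < dc \<longrightarrow> dist (c x') (c x) < \<eta>/4"
      using uc[unfolded uniformly_continuous_on_def, rule_format, OF h4] by blast
    define \<delta> where "\<delta> = min (\<eta>/4) (min da dc)"
    have \<delta>: "\<delta> > 0" "\<delta> \<le> \<eta>/4" "\<delta> \<le> da" "\<delta> \<le> dc" using \<eta> da dc by (auto simp: \<delta>_def)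
    show ?thesis
    proof (intro exI[of _ \<delta>] conjI allI impI)
      fix s t assume st: "0 \<le> s" "s \<le> t" "t \<le> T" "t - s < \<delta>"
      have sT: "s \<in> {0..T}" "t \<in> {0..T}" using st by auto
      have close_a: "\<bar>a u - a v\<bar> < \<eta>/4" if "u \<in> {s..t}" "v \<in> {s..t}" for u v
      proof -
        have "dist u v < da" using that st \<delta> by (auto simp: dist_real_def abs_le_iff)
        moreover have "u \<in> {0..T}" "v \<in> {0..T}" using that st by auto
        ultimately show ?thesis using da(2) by (auto simp: dist_real_def)
      qed
      have close_c: "\<bar>c u - c v\<bar> < \<eta>/4" if "u \<in> {s..t}" "v \<in> {s..t}" for u v
      proof -
        have "dist u v < dc" using that st \<delta> by (auto simp: dist_real_def abs_le_iff)
        moreover have "u \<in> {0..T}" "v \<in> {0..T}" using that st by auto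
        ultimately show ?thesis using dc(2) by (auto simp: dist_real_def)
      qed
      obtain \<tau> where \<tau>: "\<tau> \<in> {s..t}" "F t (a t) (c t) - F s (a t) (c t) = Pt \<tau> (a t) (c t) * (t - s)"
      proof -
        have "\<exists>x\<in>{s..t}. F t (a t) (c t) - F s (a t) (c t) = (\<lambda>h. Pt x (a t) (c t) * h) (t - s)"
        proof (rule mvt_very_simple)
          show "s \<le> t" by fact
          fix x assume x: "s \<le> x" "x \<le> t"
          then have "x \<in> {0..T}" using st by auto
          from dt[OF this, of "a t" "c t"]
          have "((\<lambda>r. F r (a t) (c t)) has_real_derivative Pt x (a t) (c t)) (at x within {s..t})"
            by (rule has_field_derivative_subset) (use st in auto)
          then show "((\<lambda>r. F r (a t) (c t)) has_derivative (\<lambda>h. Pt x (a t) (c t) * h)) (at x within {s..t})"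
            by (simp add: has_field_derivative_def)
        qed
        then show ?thesis using that by auto
      qed
      obtain u where u: "u \<in> {0..1}" "F s (a t) (c t) - F s (a s) (c t) = Pa s (a s + u * (a t - a s)) (c t) * (a t - a s)"
      proof -
        have "\<exists>x\<in>{0..1}. F s (a s + 1 * (a t - a s)) (c t) - F s (a s + 0 * (a t - a s)) (c t)
               = (\<lambda>h. Pa s (a s + x * (a t - a s)) (c t) * (a t - a s) * h) (1 - 0)"
        proof (rule mvt_very_simple)
          fix x :: real
          have "((\<lambda>u. a s + u * (a t - a s)) has_real_derivative (a t - a s)) (at x)"
            by (auto intro!: derivative_eq_intros)
          from DERIV_chain2[OF dy[OF sT(1)] this]
          have "((\<lambda>u. F s (a s + u * (a t - a s)) (c t)) has_real_derivative
                 Pa s (a s + x * (a t - a s)) (c t) * (a t - a s)) (at x within {0..1})"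
            by (rule has_field_derivative_at_within)
          then show "((\<lambda>u. F s (a s + u * (a t - a s)) (c t)) has_derivative
               (\<lambda>h. Pa s (a s + x * (a t - a s)) (c t) * (a t - a s) * h)) (at x within {0..1})"
            by (simp add: has_field_derivative_def)
        qed simp
        then show ?thesis using that by auto
      qed
      obtain v where v: "v \<in> {0..1}" "F s (a s) (c t) - F s (a s) (c s) = Pc s (a s) (c s + v * (c t - c s)) * (c t - c s)"
      proof -
        have "\<exists>x\<in>{0..1}. F s (a s) (c s + 1 * (c t - c s)) - F s (a s) (c s + 0 * (c t - c s))
               = (\<lambda>h. Pc s (a s) (c s + x * (c t - c s)) * (c t - c s) * h) (1 - 0)"
        proof (rule mvt_very_simple)
          fix x :: real
          have "((\<lambda>u. c s + u * (c t - c s)) has_real_derivative (c t - c s)) (at x)"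
            by (auto intro!: derivative_eq_intros)
          from DERIV_chain2[OF dz[OF sT(1)] this]
          have "((\<lambda>u. F s (a s) (c s + u * (c t - c s))) has_real_derivative
                 Pc s (a s) (c s + x * (c t - c s)) * (c t - c s)) (at x within {0..1})"
            by (rule has_field_derivative_at_within)
          then show "((\<lambda>u. F s (a s) (c s + u * (c t - c s))) has_derivative
               (\<lambda>h. Pc s (a s) (c s + x * (c t - c s)) * (c t - c s) * h)) (at x within {0..1})"
            by (simp add: has_field_derivative_def)
        qed simp
        then show ?thesis using that by auto
      qed
      define \<alpha> where "\<alpha> = a s + u * (a t - a s)"
      define \<zeta> where "\<zeta> = c s + v * (c t - c s)"
      have \<alpha>B: "\<bar>\<alpha>\<bar> \<le> B"
      proof -
        have "\<alpha> = (1 - u) * a s + u * a t" by (simp add: \<alpha>_def algebra_simps)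
        moreover have "\<bar>(1 - u) * a s\<bar> \<le> (1 - u) * B" "\<bar>u * a t\<bar> \<le> u * B"
          using u(1) B[OF sT(1)] B[OF sT(2)] by (auto simp: abs_mult intro: mult_left_mono)
        moreover have "(1 - u) * B + u * B = B" by (simp add: algebra_simps)
        moreover have "\<bar>(1 - u) * a s + u * a t\<bar> \<le> \<bar>(1 - u) * a s\<bar> + \<bar>u * a t\<bar>" by (rule abs_triangle_ineq)
        ultimately show ?thesis by linarith
      qed
      have \<zeta>B: "\<bar>\<zeta>\<bar> \<le> B"
      proof -
        have "\<zeta> = (1 - v) * c s + v * c t" by (simp add: \<zeta>_def algebra_simps)
        moreover have "\<bar>(1 - v) * c s\<bar> \<le> (1 - v) * B" "\<bar>v * c t\<bar> \<le> v * B"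
          using v(1) B[OF sT(1)] B[OF sT(2)] by (auto simp: abs_mult intro: mult_left_mono)
        moreover have "(1 - v) * B + v * B = B" by (simp add: algebra_simps)
        moreover have "\<bar>(1 - v) * c s + v * c t\<bar> \<le> \<bar>(1 - v) * c s\<bar> + \<bar>v * c t\<bar>" by (rule abs_triangle_ineq)
        ultimately show ?thesis by linarith
      qed
      have \<alpha>d: "\<bar>\<alpha> - a s\<bar> \<le> \<bar>a t - a s\<bar>"
        using u(1) by (auto simp: \<alpha>_def abs_mult intro: mult_left_le_one_le)
      have \<zeta>d: "\<bar>\<zeta> - c s\<bar> \<le> \<bar>c t - c s\<bar>"
        using v(1) by (auto simp: \<zeta>_def abs_mult intro: mult_left_le_one_le)
      have pt: "\<bar>Pt \<tau> (a t) (c t) - qt r\<bar> \<le> e" if r: "r \<in> {s..t}" for r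
      proof -
        have "r \<in> {0..T}" "\<tau> \<in> {0..T}" using r \<tau>(1) st by auto
        moreover have "\<bar>\<tau> - r\<bar> < \<eta>/4" using r st \<tau>(1) \<delta> unfolding atLeastAtMost_iff by (smt (verit))
        moreover have "\<bar>a t - a r\<bar> < \<eta>/4" "\<bar>c t - c r\<bar> < \<eta>/4" using close_a[of t r] close_c[of t r] r st by auto
        ultimately have "\<bar>\<tau> - r\<bar> + \<bar>a t - a r\<bar> + \<bar>c t - c r\<bar> < \<eta>1" using \<eta> by linarith
        moreover note \<eta>1(2)[rule_format, where t=\<tau> and y="a t" and z="c t" and t'=r and y'="a r" and z'="c r"]
        ultimately show ?thesis unfolding qt_def
          using B[of r] B[of t] \<open>r \<in> {0..T}\<close> \<open>\<tau> \<in> {0..T}\<close> sT by auto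
      qed
      have pa: "\<bar>Pa s \<alpha> (c t) - qa r\<bar> \<le> e" if r: "r \<in> {s..t}" for r
      proof -
        have "r \<in> {0..T}" using r st by auto
        moreover have "\<bar>s - r\<bar> < \<eta>/4" using r st \<delta> unfolding atLeastAtMost_iff by (smt (verit))
        moreover have "\<bar>a t - a s\<bar> < \<eta>/4" "\<bar>a s - a r\<bar> < \<eta>/4" "\<bar>c t - c r\<bar> < \<eta>/4"
          using close_a[of t s] close_a[of s r] close_c[of t r] r st by auto
        ultimately have "\<bar>s - r\<bar> + \<bar>\<alpha> - a r\<bar> + \<bar>c t - c r\<bar> < \<eta>2" using \<eta> \<alpha>d by linarith
        moreover note \<eta>2(2)[rule_format, where t=s and y=\<alpha> and z="c t" and t'=r and y'="a r" and z'="c r"]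
        ultimately show ?thesis unfolding qa_def
          using B[of r] B[of t] \<alpha>B sT \<open>r \<in> {0..T}\<close> by auto
      qed
      have pc: "\<bar>Pc s (a s) \<zeta> - qc r\<bar> \<le> e" if r: "r \<in> {s..t}" for r
      proof -
        have "r \<in> {0..T}" using r st by auto
        moreover have "\<bar>s - r\<bar> < \<eta>/4" using r st \<delta> unfolding atLeastAtMost_iff by (smt (verit))
        moreover have "\<bar>a s - a r\<bar> < \<eta>/4" "\<bar>c t - c s\<bar> < \<eta>/4" "\<bar>c s - c r\<bar> < \<eta>/4"
          using close_a[of s r] close_c[of t s] close_c[of s r] r st by auto
        ultimately have "\<bar>s - r\<bar> + \<bar>a s - a r\<bar> + \<bar>\<zeta> - c r\<bar> < \<eta>3" using \<eta> \<zeta>d by linarith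
        moreover note \<eta>3(2)[rule_format, where t=s and y="a s" and z=\<zeta> and t'=r and y'="a r" and z'="c r"]
        ultimately show ?thesis unfolding qc_def
          using B[of r] B[of s] \<zeta>B sT \<open>r \<in> {0..T}\<close> by auto
      qed
      have i_qt: "qt integrable_on {s..t}" using sub[OF iqt] st by auto
      have i_qa: "(\<lambda>r. qa r * w1 r) integrable_on {s..t}" using sub[OF iqa] st by auto
      have i_qc: "(\<lambda>r. qc r * w2 r) integrable_on {s..t}" using sub[OF iqc] st by auto
      have i_w1: "w1 integrable_on {s..t}" "(\<lambda>x. \<bar>w1 x\<bar>) integrable_on {s..t}" using sub[OF iw1(1)] sub[OF iw1(2)] st by auto
      have i_w2: "w2 integrable_on {s..t}" "(\<lambda>x. \<bar>w2 x\<bar>) integrable_on {s..t}" using sub[OF iw2(1)] sub[OF iw2(2)] st by auto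
      have Lst: "integral {0..t} L - integral {0..s} L = integral {s..t} qt + integral {s..t} (\<lambda>r. qa r * w1 r) + integral {s..t} (\<lambda>r. qc r * w2 r)"
        using comb[OF iL st(1,2,3)] i_qt i_qa i_qc unfolding L_def
        by (simp add: integral_add integrable_add)
      have ast: "a t - a s = integral {s..t} w1"
        using a_eq[OF sT(1)] a_eq[OF sT(2)] comb[OF iw1(1) st(1,2,3)] by simp
      have cst: "c t - c s = integral {s..t} w2"
        using c_eq[OF sT(1)] c_eq[OF sT(2)] comb[OF iw2(1) st(1,2,3)] by simp
      have \<mu>st: "\<mu> t - \<mu> s = (t - s) + integral {s..t} (\<lambda>x. \<bar>w1 x\<bar>) + integral {s..t} (\<lambda>x. \<bar>w2 x\<bar>)"
        using comb[OF iw1(2) st(1,2,3)] comb[OF iw2(2) st(1,2,3)] unfolding \<mu>_def by simp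
      have X1: "\<bar>Pt \<tau> (a t) (c t) * (t - s) - integral {s..t} qt\<bar> \<le> e * (t - s)"
      proof -
        have "Pt \<tau> (a t) (c t) * (t - s) - integral {s..t} qt = integral {s..t} (\<lambda>r. Pt \<tau> (a t) (c t) - qt r)"
        proof -
          have "integral {s..t} (\<lambda>r. Pt \<tau> (a t) (c t) - qt r) = integral {s..t} (\<lambda>r. Pt \<tau> (a t) (c t)) - integral {s..t} qt"
            by (intro integral_diff integrable_const_ivl i_qt)
          then show ?thesis using st by simp
        qed
        also have "\<bar>\<dots>\<bar> \<le> integral {s..t} (\<lambda>r. e)"
          using pt i_qt by (intro int_abs_bound integrable_diff integrable_const_ivl) auto
        finally show ?thesis using st by (simp add: mult.commute)
      qed
      have X2: "\<bar>Pa s \<alpha> (c t) * (a t - a s) - integral {s..t} (\<lambda>r. qa r * w1 r)\<bar> \<le> e * integral {s..t} (\<lambda>x. \<bar>w1 x\<bar>)"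
      proof -
        have "Pa s \<alpha> (c t) * (a t - a s) - integral {s..t} (\<lambda>r. qa r * w1 r)
             = integral {s..t} (\<lambda>r. (Pa s \<alpha> (c t) - qa r) * w1 r)"
        proof -
          have "integral {s..t} (\<lambda>r. (Pa s \<alpha> (c t) - qa r) * w1 r)
              = integral {s..t} (\<lambda>r. Pa s \<alpha> (c t) * w1 r - qa r * w1 r)"
            by (simp add: left_diff_distrib)
          also have "\<dots> = integral {s..t} (\<lambda>r. Pa s \<alpha> (c t) * w1 r) - integral {s..t} (\<lambda>r. qa r * w1 r)"
            by (intro integral_diff integrable_on_mult_right i_qa i_w1(1))
          also have "integral {s..t} (\<lambda>r. Pa s \<alpha> (c t) * w1 r) = Pa s \<alpha> (c t) * integral {s..t} w1"
            by (rule integral_mult[symmetric]) (rule i_w1(1))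
          finally show ?thesis unfolding ast by simp
        qed
        also have "\<bar>\<dots>\<bar> \<le> integral {s..t} (\<lambda>r. e * \<bar>w1 r\<bar>)"
        proof (intro int_abs_bound)
          show "(\<lambda>r. (Pa s \<alpha> (c t) - qa r) * w1 r) integrable_on {s..t}"
            unfolding left_diff_distrib using i_qa i_w1 by (intro integrable_diff integrable_on_mult_right)
          show "(\<lambda>r. e * \<bar>w1 r\<bar>) integrable_on {s..t}" using i_w1 by (intro integrable_on_mult_right)
          fix r assume "r \<in> {s..t}"
          then show "\<bar>(Pa s \<alpha> (c t) - qa r) * w1 r\<bar> \<le> e * \<bar>w1 r\<bar>"
            using pa by (simp add: abs_mult mult_right_mono)
        qed
        also have "integral {s..t} (\<lambda>r. e * \<bar>w1 r\<bar>) = e * integral {s..t} (\<lambda>r. \<bar>w1 r\<bar>)"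
          by (rule integral_mult[symmetric]) (rule i_w1(2))
        finally show ?thesis .
      qed
      have X3: "\<bar>Pc s (a s) \<zeta> * (c t - c s) - integral {s..t} (\<lambda>r. qc r * w2 r)\<bar> \<le> e * integral {s..t} (\<lambda>x. \<bar>w2 x\<bar>)"
      proof -
        have "Pc s (a s) \<zeta> * (c t - c s) - integral {s..t} (\<lambda>r. qc r * w2 r)
             = integral {s..t} (\<lambda>r. (Pc s (a s) \<zeta> - qc r) * w2 r)"
        proof -
          have "integral {s..t} (\<lambda>r. (Pc s (a s) \<zeta> - qc r) * w2 r)
              = integral {s..t} (\<lambda>r. Pc s (a s) \<zeta> * w2 r - qc r * w2 r)"
            by (simp add: left_diff_distrib)
          also have "\<dots> = integral {s..t} (\<lambda>r. Pc s (a s) \<zeta> * w2 r) - integral {s..t} (\<lambda>r. qc r * w2 r)"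
            by (intro integral_diff integrable_on_mult_right i_qc i_w2(1))
          also have "integral {s..t} (\<lambda>r. Pc s (a s) \<zeta> * w2 r) = Pc s (a s) \<zeta> * integral {s..t} w2"
            by (rule integral_mult[symmetric]) (rule i_w2(1))
          finally show ?thesis unfolding cst by simp
        qed
        also have "\<bar>\<dots>\<bar> \<le> integral {s..t} (\<lambda>r. e * \<bar>w2 r\<bar>)"
        proof (intro int_abs_bound)
          show "(\<lambda>r. (Pc s (a s) \<zeta> - qc r) * w2 r) integrable_on {s..t}"
            unfolding left_diff_distrib using i_qc i_w2 by (intro integrable_diff integrable_on_mult_right)
          show "(\<lambda>r. e * \<bar>w2 r\<bar>) integrable_on {s..t}" using i_w2 by (intro integrable_on_mult_right)
          fix r assume "r \<in> {s..t}"
          then show "\<bar>(Pc s (a s) \<zeta> - qc r) * w2 r\<bar> \<le> e * \<bar>w2 r\<bar>"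
            using pc by (simp add: abs_mult mult_right_mono)
        qed
        also have "integral {s..t} (\<lambda>r. e * \<bar>w2 r\<bar>) = e * integral {s..t} (\<lambda>r. \<bar>w2 r\<bar>)"
          by (rule integral_mult[symmetric]) (rule i_w2(2))
        finally show ?thesis .
      qed
      have "E t - E s = (Pt \<tau> (a t) (c t) * (t - s) - integral {s..t} qt)
          + (Pa s \<alpha> (c t) * (a t - a s) - integral {s..t} (\<lambda>r. qa r * w1 r))
          + (Pc s (a s) \<zeta> * (c t - c s) - integral {s..t} (\<lambda>r. qc r * w2 r))"
        using \<tau>(2) u(2) v(2) Lst unfolding E_def \<alpha>_def \<zeta>_def by (simp add: algebra_simps)
      moreover have "e * (\<mu> t - \<mu> s) = e * (t - s) + e * integral {s..t} (\<lambda>x. \<bar>w1 x\<bar>) + e * integral {s..t} (\<lambda>x. \<bar>w2 x\<bar>)"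
        unfolding \<mu>st by (simp add: algebra_simps)
      ultimately show "\<bar>E t - E s\<bar> \<le> e * (\<mu> t - \<mu> s)" using X1 X2 X3 by linarith
    qed (fact \<delta>)
  qed
  have "E t = E 0" using t by (intro chain_steps[OF loc mono]) auto
  then show ?thesis unfolding E_def L_def qt_def qa_def qc_def by simp
qed

lemma young43: fixes c d :: real shows "c^3 * d \<le> (3 * c^4 + d^4) / 4"
proof -
  have "3 * c^4 + d^4 - 4 * (c^3 * d) = (c - d)^2 * (2 * c^2 + (c + d)^2)"
    by (simp add: power2_eq_square power3_eq_cube power4_eq_xxxx algebra_simps)
  moreover have "(c - d)^2 * (2 * c^2 + (c + d)^2) \<ge> 0" by simp
  ultimately have "0 \<le> 3 * c^4 + d^4 - 4 * (c^3 * d)" by simp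
  then show ?thesis by simp
qed

lemma small_pow:
  fixes a :: real and k :: nat
  assumes "\<bar>a\<bar> \<le> 1/2" "k \<ge> 1"
  shows "a^k \<le> 1/2"
proof -
  have "a^k \<le> \<bar>a\<bar>^k" by (metis abs_ge_self power_abs)
  also have "\<bar>a\<bar>^k \<le> \<bar>a\<bar>^1" using assms by (intro power_decreasing) auto
  finally show ?thesis using assms by simp
qed

lemma key_ineq:
  fixes g1 g gt b h1 h1' g2 h2 a c d M :: real and m n :: nat
  assumes g: "0 \<le> g" "g \<le> g1" and gt: "0 \<le> gt" "gt \<le> g1" and b: "0 \<le> b"
    and h1: "0 \<le> h1" "h1 \<le> M" "h1' \<le> h1" and g2: "1 + g1 \<le> g2" and h2: "h2 = h1 / (1 + h1)"
    and a: "\<bar>a\<bar> \<le> 1/2" and c: "\<bar>c\<bar> \<le> 1/2" and m: "m > 3" and n: "n > 1"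
  shows "g1 * (a^2/2 + (1 + h1) * c^4/4) + h1' * c^4/4 + a * (- g1 * a + g * a^m - h1 * c^3)
     + (1 + h1) * c^3 * (h2 * a - g2 * c + gt * c^n - b * a^2 * c + d) \<le> (1 + M) / 4 * d^4"
proof -
  define P where "P = 1 + h1"
  define A where "A = a^2"
  define C where "C = c^4"
  define X where "X = a * a^m"
  define Y where "Y = c^3 * c^n"
  define Z where "Z = c^3 * d"
  have P: "P \<ge> 1" using h1 by (simp add: P_def)
  have Ph2: "P * h2 = h1" using h1 by (simp add: P_def h2)
  have A0: "A \<ge> 0" and C0: "C \<ge> 0" by (simp_all add: A_def C_def)
  have Ph2': "P * h2 - h1 = 0" using Ph2 by simp
  have eq: "g1 * (a^2/2 + (1 + h1) * c^4/4) + h1' * c^4/4 + a * (- g1 * a + g * a^m - h1 * c^3)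
     + (1 + h1) * c^3 * (h2 * a - g2 * c + gt * c^n - b * a^2 * c + d)
     = g1 * A / 2 + (P * g1 * C) / 4 + (h1' * C) / 4 - g1 * A + g * X - (P * g2 * C) + (P * gt * Y)
       - (P * b * A * C) + (P * Z) + (P * h2 - h1) * (a * c^3)"
    unfolding P_def A_def C_def X_def Y_def Z_def
    by (simp add: power2_eq_square power3_eq_cube power4_eq_xxxx algebra_simps)
  have X: "X \<le> A / 2"
  proof -
    obtain k where k: "m = Suc k" using m by (cases m) auto
    have "X = A * a^k" unfolding X_def A_def k by (simp add: power2_eq_square)
    also have "\<dots> \<le> A * (1/2)" using small_pow[OF a, of k] m k A0 by (intro mult_left_mono) auto
    finally show ?thesis by simp
  qed
  have Y: "Y \<le> C / 2"
  proof -
    obtain k where k: "n = Suc k" using n by (cases n) auto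
    have "Y = C * c^k" unfolding Y_def C_def k by (simp add: power3_eq_cube power4_eq_xxxx)
    also have "\<dots> \<le> C * (1/2)" using small_pow[OF c, of k] n k C0 by (intro mult_left_mono) auto
    finally show ?thesis by simp
  qed
  have Z: "Z \<le> (3 * C + d^4) / 4" unfolding Z_def C_def by (rule young43)
  have f1: "g * X \<le> g1 * A / 2"
  proof -
    have "g * X \<le> g * (A/2)" using X g by (intro mult_left_mono) auto
    also have "\<dots> \<le> g1 * (A/2)" using g A0 by (intro mult_right_mono) auto
    finally show ?thesis by simp
  qed
  have f2: "P * gt * Y \<le> (P * g1 * C) / 2"
  proof -
    have "gt * Y \<le> gt * (C/2)" using Y gt by (intro mult_left_mono) auto
    also have "\<dots> \<le> g1 * (C/2)" using gt C0 by (intro mult_right_mono) auto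
    finally have "gt * Y \<le> g1 * (C / 2)" .
    then have "P * (gt * Y) \<le> P * (g1 * (C/2))" using P by (intro mult_left_mono) auto
    then show ?thesis by (simp add: mult.assoc)
  qed
  have f3: "P * Z \<le> 3 * (P * C) / 4 + (P * d^4) / 4"
    using mult_left_mono[OF Z, of P] P by (simp add: algebra_simps)
  have f4: "h1' * C \<le> P * C" using h1 C0 by (intro mult_right_mono) (auto simp: P_def)
  have f5: "P * g2 * C \<ge> P * C + P * g1 * C"
  proof -
    have "P * (1 + g1) * C \<le> P * g2 * C" using g2 P C0 by (intro mult_right_mono mult_left_mono) auto
    then show ?thesis by (simp add: algebra_simps)
  qed
  have f6: "P * b * A * C \<ge> 0" using P b A0 C0 by simp
  have f7: "P * d^4 \<le> (1 + M) * d^4" using h1 by (intro mult_right_mono) (auto simp: P_def)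
  have f8: "P * g1 * C \<ge> 0" using P g C0 by simp
  have f9: "(P * h2 - h1) * (a * c^3) = 0" using Ph2' by simp
  have f10: "(1 + M) / 4 * d^4 = ((1 + M) * d^4) / 4" by simp
  show ?thesis unfolding eq f9 f10 using f1 f2 f3 f4 f5 f6 f7 f8 by linarith
qed

lemma cont_fst_comp:
  fixes f :: "real \<Rightarrow> real"
  assumes "continuous_on {0..t} f"
  shows "continuous_on ({0..t} \<times> (UNIV :: (real \<times> real) set)) (\<lambda>p. f (fst p))"
  by (rule continuous_on_compose2[OF assms continuous_on_fst[OF continuous_on_id]]) auto

lemma lyap_est:
  fixes g gt b h1 h1' g1 g2 h2 a c d :: "real \<Rightarrow> real" and M t :: real and m n :: nat
  assumes g_cont: "continuous_on {0..} g" and g_nn: "\<forall>t\<ge>0. g t \<ge> 0"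
    and gt_cont: "continuous_on {0..} gt" and gt_nn: "\<forall>t\<ge>0. gt t \<ge> 0"
    and b_cont: "continuous_on {0..} b" and b_pos: "\<forall>t\<ge>0. b t > 0"
    and h1_deriv: "\<forall>t\<ge>0. (h1 has_real_derivative h1' t) (at t within {0..})"
    and h1'_cont: "continuous_on {0..} h1'"
    and h1_bnd: "\<forall>t\<ge>0. 0 \<le> h1 t \<and> h1 t \<le> M"
    and h1'_le: "\<forall>t\<ge>0. h1' t \<le> h1 t"
    and m_gt: "m > 3" and n_gt: "n > 1"
    and g1_cont: "continuous_on {0..} g1" and g1_nn: "\<forall>t\<ge>0. g1 t \<ge> 0"
    and g1_ge: "\<forall>t\<ge>0. g1 t \<ge> max (g t) (gt t)"
    and g2_ge: "\<forall>t\<ge>0. g2 t \<ge> 1 + g1 t"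
    and h2_eq: "\<forall>t\<ge>0. h2 t = h1 t / (1 + h1 t)"
    and t: "0 \<le> t"
    and ca: "continuous_on {0..t} a" and cc: "continuous_on {0..t} c"
    and w2: "(\<lambda>s. h2 s * a s - g2 s * c s + gt s * c s ^ n - b s * (a s)\<^sup>2 * c s + d s) absolutely_integrable_on {0..t}"
    and a_eq: "\<And>s. s \<in> {0..t} \<Longrightarrow> a s = a 0 + integral {0..s} (\<lambda>s. - g1 s * a s + g s * a s ^ m - h1 s * c s ^ 3)"
    and c_eq: "\<And>s. s \<in> {0..t} \<Longrightarrow> c s = c 0 + integral {0..s} (\<lambda>s. h2 s * a s - g2 s * c s + gt s * c s ^ n - b s * (a s)\<^sup>2 * c s + d s)"
    and d4: "(\<lambda>s. d s ^ 4) integrable_on {0..t}"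
    and small: "\<And>s. s \<in> {0..t} \<Longrightarrow> \<bar>a s\<bar> \<le> 1/2 \<and> \<bar>c s\<bar> \<le> 1/2"
  shows "exp (integral {0..t} g1) * ((a t)\<^sup>2 / 2 + (1 + h1 t) * c t ^ 4 / 4)
     \<le> ((a 0)\<^sup>2 / 2 + (1 + h1 0) * c 0 ^ 4 / 4) + exp (integral {0..t} g1) * ((1 + M) / 4 * integral {0..t} (\<lambda>s. d s ^ 4))"
proof -
  define G where "G = (\<lambda>s. integral {0..s} g1)"
  define w1 where "w1 = (\<lambda>s. - g1 s * a s + g s * a s ^ m - h1 s * c s ^ 3)"
  define w2f where "w2f = (\<lambda>s. h2 s * a s - g2 s * c s + gt s * c s ^ n - b s * (a s)\<^sup>2 * c s + d s)"
  define F where "F = (\<lambda>\<tau> y z. exp (G \<tau>) * (y\<^sup>2 / 2 + (1 + h1 \<tau>) * z ^ 4 / 4))"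
  define Pt where "Pt = (\<lambda>\<tau> y z. exp (G \<tau>) * g1 \<tau> * (y\<^sup>2 / 2 + (1 + h1 \<tau>) * z ^ 4 / 4) + exp (G \<tau>) * (h1' \<tau> * z ^ 4 / 4))"
  define Pa where "Pa = (\<lambda>\<tau> (y::real) (z::real). exp (G \<tau>) * y)"
  define Pc where "Pc = (\<lambda>\<tau> (y::real) (z::real). exp (G \<tau>) * ((1 + h1 \<tau>) * z ^ 3))"
  have sub: "{0..t} \<subseteq> {0..}" by auto
  have h1c: "continuous_on {0..} h1"
    using h1_deriv by (intro DERIV_continuous_on) auto
  have g1t: "continuous_on {0..t} g1" using continuous_on_subset[OF g1_cont sub] .
  have h1t: "continuous_on {0..t} h1" using continuous_on_subset[OF h1c sub] .
  have h1't: "continuous_on {0..t} h1'" using continuous_on_subset[OF h1'_cont sub] .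
  have gt': "continuous_on {0..t} g" using continuous_on_subset[OF g_cont sub] .
  have Gd: "(G has_real_derivative g1 \<tau>) (at \<tau> within {0..t})" if "\<tau> \<in> {0..t}" for \<tau>
    unfolding G_def using integral_has_real_derivative[OF g1t that] .
  have Gc: "continuous_on {0..t} G" using Gd by (intro DERIV_continuous_on)
  have h1d: "(h1 has_real_derivative h1' \<tau>) (at \<tau> within {0..t})" if "\<tau> \<in> {0..t}" for \<tau>
    using h1_deriv that by (intro has_field_derivative_subset[OF _ sub]) auto
  have dt: "((\<lambda>\<tau>. F \<tau> y z) has_real_derivative Pt \<tau> y z) (at \<tau> within {0..t})" if "\<tau> \<in> {0..t}" for \<tau> y z
    unfolding F_def Pt_def using Gd[OF that] h1d[OF that]
    by (auto intro!: derivative_eq_intros simp: algebra_simps)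
  have dy: "((\<lambda>y. F \<tau> y z) has_real_derivative Pa \<tau> y z) (at y)" for \<tau> y z
    unfolding F_def Pa_def by (auto intro!: derivative_eq_intros simp: algebra_simps)
  have dz: "((\<lambda>z. F \<tau> y z) has_real_derivative Pc \<tau> y z) (at z)" for \<tau> y z
    unfolding F_def Pc_def by (auto intro!: derivative_eq_intros simp: algebra_simps)
  have cG: "continuous_on ({0..t} \<times> (UNIV :: (real \<times> real) set)) (\<lambda>p. G (fst p))" by (rule cont_fst_comp[OF Gc])
  have cg1: "continuous_on ({0..t} \<times> (UNIV :: (real \<times> real) set)) (\<lambda>p. g1 (fst p))" by (rule cont_fst_comp[OF g1t])
  have ch1: "continuous_on ({0..t} \<times> (UNIV :: (real \<times> real) set)) (\<lambda>p. h1 (fst p))" by (rule cont_fst_comp[OF h1t])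
  have ch1': "continuous_on ({0..t} \<times> (UNIV :: (real \<times> real) set)) (\<lambda>p. h1' (fst p))" by (rule cont_fst_comp[OF h1't])
  have cPt: "continuous_on ({0..t} \<times> UNIV) (\<lambda>(\<tau>,y,z). Pt \<tau> y z)"
    unfolding Pt_def case_prod_beta' by (intro continuous_intros cG cg1 ch1 ch1') auto
  have cPa: "continuous_on ({0..t} \<times> UNIV) (\<lambda>(\<tau>,y,z). Pa \<tau> y z)"
    unfolding Pa_def case_prod_beta' by (intro continuous_intros cG)
  have cPc: "continuous_on ({0..t} \<times> UNIV) (\<lambda>(\<tau>,y,z). Pc \<tau> y z)"
    unfolding Pc_def case_prod_beta' by (intro continuous_intros cG ch1)
  have cw1: "continuous_on {0..t} w1" unfolding w1_def
    by (intro continuous_intros g1t gt' h1t ca cc)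
  have w1a: "w1 absolutely_integrable_on {0..t}" using cw1 by (rule absolutely_integrable_continuous_real)
  have w2a: "w2f absolutely_integrable_on {0..t}" using w2 unfolding w2f_def .
  have eqF: "F t (a t) (c t) = F 0 (a 0) (c 0) +
     integral {0..t} (\<lambda>s. Pt s (a s) (c s) + Pa s (a s) (c s) * w1 s + Pc s (a s) (c s) * w2f s)"
  proof (rule chain3[OF ca cc w1a w2a _ _ dt dy dz cPt cPa cPc])
    show "a s = a 0 + integral {0..s} w1" if "s \<in> {0..t}" for s
      unfolding w1_def by (rule a_eq[OF that])
    show "c s = c 0 + integral {0..s} w2f" if "s \<in> {0..t}" for s
      unfolding w2f_def by (rule c_eq[OF that])
    show "t \<in> {0..t}" using t by simp
  qed
  define K where "K = (1 + M) / 4"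
  have M0: "M \<ge> 0" using h1_bnd[rule_format, of 0] by linarith
  have K0: "K \<ge> 0" using M0 by (simp add: K_def)
  have cqt: "continuous_on {0..t} (\<lambda>s. Pt s (a s) (c s))"
    unfolding Pt_def by (intro continuous_intros Gc g1t h1t h1't ca cc) auto
  have cqa: "continuous_on {0..t} (\<lambda>s. Pa s (a s) (c s))"
    unfolding Pa_def by (intro continuous_intros Gc ca)
  have cqc: "continuous_on {0..t} (\<lambda>s. Pc s (a s) (c s))"
    unfolding Pc_def by (intro continuous_intros Gc h1t cc)
  have i1: "(\<lambda>s. Pt s (a s) (c s)) integrable_on {0..t}" using cqt by (rule integrable_continuous_interval)
  have i2: "(\<lambda>s. Pa s (a s) (c s) * w1 s) integrable_on {0..t}"
    using abs_int_parts(1)[OF abs_int_prod[OF cqa w1a]] .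
  have i3: "(\<lambda>s. Pc s (a s) (c s) * w2f s) integrable_on {0..t}"
    using abs_int_parts(1)[OF abs_int_prod[OF cqc w2a]] .
  have iL: "(\<lambda>s. Pt s (a s) (c s) + Pa s (a s) (c s) * w1 s + Pc s (a s) (c s) * w2f s) integrable_on {0..t}"
    by (intro integrable_add i1 i2 i3)
  have Gmono: "G s \<le> G t" if "s \<in> {0..t}" for s
    unfolding G_def using that g1_nn
    by (intro integral_subset_le integrable_on_subinterval[OF integrable_continuous_interval[OF g1t]]
        integrable_continuous_interval[OF g1t]) auto
  have pw: "Pt s (a s) (c s) + Pa s (a s) (c s) * w1 s + Pc s (a s) (c s) * w2f s
      \<le> exp (G t) * (K * d s ^ 4)" if s: "s \<in> {0..t}" for s
  proof -
    have s0: "s \<ge> 0" using s by simp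
    have eq: "Pt s (a s) (c s) + Pa s (a s) (c s) * w1 s + Pc s (a s) (c s) * w2f s =
      exp (G s) * (g1 s * ((a s)\<^sup>2/2 + (1 + h1 s) * c s ^ 4/4) + h1' s * c s ^ 4/4
        + a s * (- g1 s * a s + g s * a s ^ m - h1 s * c s ^ 3)
        + (1 + h1 s) * c s ^ 3 * (h2 s * a s - g2 s * c s + gt s * c s ^ n - b s * (a s)\<^sup>2 * c s + d s))"
      unfolding Pt_def Pa_def Pc_def w1_def w2f_def by (simp add: algebra_simps)
    have key: "g1 s * ((a s)\<^sup>2/2 + (1 + h1 s) * c s ^ 4/4) + h1' s * c s ^ 4/4
        + a s * (- g1 s * a s + g s * a s ^ m - h1 s * c s ^ 3)
        + (1 + h1 s) * c s ^ 3 * (h2 s * a s - g2 s * c s + gt s * c s ^ n - b s * (a s)\<^sup>2 * c s + d s)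
        \<le> (1 + M) / 4 * d s ^ 4"
    proof (rule key_ineq)
      show "0 \<le> g s" "g s \<le> g1 s" "0 \<le> gt s" "gt s \<le> g1 s" "0 \<le> b s"
        using g_nn gt_nn g1_ge b_pos s0 by (auto simp: less_imp_le)
      show "0 \<le> h1 s" "h1 s \<le> M" "h1' s \<le> h1 s" using h1_bnd h1'_le s0 by auto
      show "1 + g1 s \<le> g2 s" "h2 s = h1 s / (1 + h1 s)" using g2_ge h2_eq s0 by auto
      show "\<bar>a s\<bar> \<le> 1/2" "\<bar>c s\<bar> \<le> 1/2" using small[OF s] by auto
    qed (use m_gt n_gt in auto)
    have "exp (G s) * (g1 s * ((a s)\<^sup>2/2 + (1 + h1 s) * c s ^ 4/4) + h1' s * c s ^ 4/4
        + a s * (- g1 s * a s + g s * a s ^ m - h1 s * c s ^ 3)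
        + (1 + h1 s) * c s ^ 3 * (h2 s * a s - g2 s * c s + gt s * c s ^ n - b s * (a s)\<^sup>2 * c s + d s))
        \<le> exp (G s) * (K * d s ^ 4)" using key unfolding K_def by (intro mult_left_mono) auto
    also have "\<dots> \<le> exp (G t) * (K * d s ^ 4)"
      using Gmono[OF s] K0 by (intro mult_right_mono) auto
    finally show ?thesis unfolding eq .
  qed
  have "integral {0..t} (\<lambda>s. Pt s (a s) (c s) + Pa s (a s) (c s) * w1 s + Pc s (a s) (c s) * w2f s)
      \<le> integral {0..t} (\<lambda>s. exp (G t) * (K * d s ^ 4))"
    using pw iL d4 by (intro integral_le integrable_on_mult_right) auto
  also have "\<dots> = exp (G t) * integral {0..t} (\<lambda>s. K * d s ^ 4)"
    by (rule integral_mult[symmetric]) (intro integrable_on_mult_right d4)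
  also have "integral {0..t} (\<lambda>s. K * d s ^ 4) = K * integral {0..t} (\<lambda>s. d s ^ 4)"
    by (rule integral_mult[symmetric]) (rule d4)
  finally have I: "integral {0..t} (\<lambda>s. Pt s (a s) (c s) + Pa s (a s) (c s) * w1 s + Pc s (a s) (c s) * w2f s)
      \<le> exp (G t) * (K * integral {0..t} (\<lambda>s. d s ^ 4))" .
  have G0: "G 0 = 0" unfolding G_def by simp
  have F0: "F 0 (a 0) (c 0) = (a 0)\<^sup>2 / 2 + (1 + h1 0) * c 0 ^ 4 / 4" unfolding F_def G0 by simp
  have "F t (a t) (c t) \<le> (a 0)\<^sup>2 / 2 + (1 + h1 0) * c 0 ^ 4 / 4 + exp (G t) * (K * integral {0..t} (\<lambda>s. d s ^ 4))"
    using eqF I F0 by linarith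
  then show ?thesis unfolding F_def G_def K_def .
qed

lemma bootstrap:
  fixes f :: "real \<Rightarrow> real"
  assumes cf: "continuous_on {0..T} f" and f0: "f 0 < \<rho>" and T: "0 \<le> T"
    and step: "\<And>t. t \<in> {0..T} \<Longrightarrow> (\<forall>s\<in>{0..t}. f s \<le> \<rho>) \<Longrightarrow> f t < \<rho>"
  shows "\<forall>t\<in>{0..T}. f t < \<rho>"
proof (rule ccontr)
  assume "\<not> (\<forall>t\<in>{0..T}. f t < \<rho>)"
  then obtain t0 where t0: "t0 \<in> {0..T}" "f t0 \<ge> \<rho>" by (auto simp: not_less)
  define S where "S = {0..T} \<inter> f -` {\<rho>..}"
  have Sne: "S \<noteq> {}" using t0 by (auto simp: S_def)
  have Sbdd: "bdd_below S" unfolding S_def by (rule bdd_belowI[of _ 0]) auto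
  have Scl: "closed S" unfolding S_def by (intro continuous_closed_preimage cf) auto
  define t1 where "t1 = Inf S"
  have t1S: "t1 \<in> S" unfolding t1_def by (rule closed_contains_Inf[OF Sne Sbdd Scl])
  have t1: "0 \<le> t1" "t1 \<le> T" "f t1 \<ge> \<rho>" using t1S by (auto simp: S_def)
  have low: "t1 \<le> s" if "s \<in> S" for s unfolding t1_def using that Sbdd by (rule cInf_lower)
  have "\<exists>s. 0 \<le> s \<and> s \<le> t1 \<and> f s = \<rho>"
    using f0 t1 by (intro IVT' continuous_on_subset[OF cf]) auto
  then obtain s where s: "0 \<le> s" "s \<le> t1" "f s = \<rho>" by blast
  then have "s \<in> S" using t1 by (auto simp: S_def)
  then have "s = t1" using low s by force
  have "\<forall>r\<in>{0..t1}. f r \<le> \<rho>"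
  proof
    fix r assume r: "r \<in> {0..t1}"
    show "f r \<le> \<rho>"
    proof (rule ccontr)
      assume "\<not> f r \<le> \<rho>"
      then have "r \<in> S" using r t1 by (auto simp: S_def)
      then have "r = t1" using low r by force
      then show False using \<open>\<not> f r \<le> \<rho>\<close> \<open>s = t1\<close> s by simp
    qed
  qed
  then have "f t1 < \<rho>" using step t1 by auto
  then show False using t1 by simp
qed

lemma norm_est:
  fixes a c h E V0 W psi K D :: real
  assumes a: "\<bar>a\<bar> \<le> 1/2" and h: "h \<ge> 0" and E: "E > 0"
    and V: "E * (a\<^sup>2 / 2 + (1 + h) * c ^ 4 / 4) \<le> V0 + E * (K * D)"
    and V0: "0 \<le> V0" "V0 \<le> W" and psi: "1 / E \<le> psi" and KD: "K * D \<ge> 0"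
  shows "sqrt (a\<^sup>2 + c\<^sup>2) \<le> 2 * sqrt (sqrt (psi * W)) + 2 * sqrt (sqrt (K * D))"
proof -
  define V where "V = a\<^sup>2 / 2 + (1 + h) * c ^ 4 / 4"
  have "V \<le> V0 / E + K * D"
  proof -
    have "E * V \<le> V0 + E * (K * D)" using V by (simp add: V_def)
    then have "V \<le> (V0 + E * (K * D)) / E" using E by (simp add: field_simps)
    then show ?thesis using E by (simp add: field_simps)
  qed
  moreover have vpw: "V0 / E \<le> psi * W"
  proof -
    have "V0 / E = V0 * (1 / E)" by simp
    also have "\<dots> \<le> W * psi" using V0 psi E by (intro mult_mono) auto
    finally show ?thesis by (simp add: mult.commute)
  qed
  ultimately have VV: "V \<le> psi * W + K * D" by linarith
  have PW: "0 \<le> psi * W" using vpw V0 E by (meson divide_nonneg_pos order_trans)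
  have V0': "0 \<le> V" unfolding V_def using h by simp
  have sq: "(a\<^sup>2 + c\<^sup>2)\<^sup>2 \<le> 16 * V"
  proof -
    have "(a\<^sup>2 + c\<^sup>2)\<^sup>2 \<le> 2 * a ^ 4 + 2 * c ^ 4"
    proof -
      have "0 \<le> (a\<^sup>2 - c\<^sup>2)\<^sup>2" by simp
      then show ?thesis by (simp add: power2_eq_square power4_eq_xxxx algebra_simps)
    qed
    moreover have "a ^ 4 \<le> a\<^sup>2 / 4"
    proof -
      have "a\<^sup>2 \<le> (1/2)\<^sup>2" using a by (metis abs_ge_zero power2_abs power_mono)
      then have "a\<^sup>2 * a\<^sup>2 \<le> a\<^sup>2 * (1/4)" by (intro mult_left_mono) (auto simp: power2_eq_square)
      then show ?thesis by (simp add: power2_eq_square power4_eq_xxxx)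
    qed
    moreover have "c ^ 4 \<le> (1 + h) * c ^ 4"
    proof -
      have "0 \<le> h * c ^ 4" using h by simp
      then show ?thesis by (simp add: algebra_simps)
    qed
    moreover have "a\<^sup>2 \<ge> 0" "c ^ 4 \<ge> 0" by simp_all
    moreover have "16 * V = 8 * a\<^sup>2 + 4 * ((1 + h) * c ^ 4)" by (simp add: V_def algebra_simps)
    ultimately show ?thesis by linarith
  qed
  have "a\<^sup>2 + c\<^sup>2 \<le> 4 * sqrt V"
  proof -
    have "a\<^sup>2 + c\<^sup>2 = sqrt ((a\<^sup>2 + c\<^sup>2)\<^sup>2)" by simp
    also have "\<dots> \<le> sqrt (16 * V)" by (rule real_sqrt_le_mono[OF sq])
    also have "\<dots> = 4 * sqrt V" by (simp add: real_sqrt_mult)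
    finally show ?thesis .
  qed
  then have "sqrt (a\<^sup>2 + c\<^sup>2) \<le> sqrt (4 * sqrt V)" by simp
  also have "\<dots> = 2 * sqrt (sqrt V)" by (simp add: real_sqrt_mult)
  also have "sqrt (sqrt V) \<le> sqrt (sqrt (psi * W) + sqrt (K * D))"
  proof -
    have "sqrt V \<le> sqrt (psi * W + K * D)" using VV by simp
    also have "\<dots> \<le> sqrt (psi * W) + sqrt (K * D)"
      using PW KD by (intro sqrt_add_le_add_sqrt) auto
    finally show ?thesis by simp
  qed
  also have "\<dots> \<le> sqrt (sqrt (psi * W)) + sqrt (sqrt (K * D))"
    using PW KD by (intro sqrt_add_le_add_sqrt) auto
  finally show ?thesis by simp
qed

lemma G_props:
  fixes g1 :: "real \<Rightarrow> real"
  assumes gc: "continuous_on {0..} g1" and gn: "\<forall>t\<ge>0. g1 t \<ge> 0"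
  shows "continuous_on {0..} (\<lambda>t. integral {0..t} g1)"
    and "\<And>s t. 0 \<le> s \<Longrightarrow> s \<le> t \<Longrightarrow> integral {0..s} g1 \<le> integral {0..t} g1"
    and "integral {0..0} g1 = 0"
proof -
  show "continuous_on {0..} (\<lambda>t. integral {0..t} g1)"
  proof (rule DERIV_continuous_on)
    fix x :: real assume x: "x \<in> {0..}"
    have c1: "continuous_on {0..x+1} g1" using gc by (rule continuous_on_subset) auto
    have "((\<lambda>t. integral {0..t} g1) has_real_derivative g1 x) (at x within {0..x+1})"
      using x by (intro integral_has_real_derivative c1) auto
    moreover have "at x within {0..x+1} = at x within {0..}"
      by (rule at_within_nhd[of _ "{..<x+1}"]) (use x in auto)
    ultimately show "((\<lambda>t. integral {0..t} g1) has_real_derivative g1 x) (at x within {0..})" by simp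
  qed
  show "integral {0..s} g1 \<le> integral {0..t} g1" if "0 \<le> s" "s \<le> t" for s t
  proof -
    have c1: "continuous_on {0..t} g1" using gc by (rule continuous_on_subset) auto
    show ?thesis using that gn
      by (intro integral_subset_le integrable_on_subinterval[OF integrable_continuous_interval[OF c1]]
          integrable_continuous_interval[OF c1]) auto
  qed
  show "integral {0..0} g1 = 0" by simp
qed

lemma classK_pow4: "class_K (\<lambda>r. r ^ 4)"
  unfolding class_K_def strict_mono_on_def
  by (auto intro!: continuous_intros power_strict_mono)

lemma classKinf_sig:
  fixes K :: real assumes K: "K > 0"
  shows "class_Kinf (\<lambda>s. 2 * sqrt (sqrt (K * s)))"
  unfolding class_Kinf_def class_K_def
proof (intro conjI allI impI strict_mono_onI)
  show "continuous_on {0..} (\<lambda>s. 2 * sqrt (sqrt (K * s)))" by (intro continuous_intros)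
  show "2 * sqrt (sqrt (K * r)) < 2 * sqrt (sqrt (K * s))" if "r \<in> {0..}" "s \<in> {0..}" "r < s" for r s
    using K that by simp
  show "2 * sqrt (sqrt (K * 0)) = 0" by simp
  fix M :: real
  define r where "r = (\<bar>M\<bar> + 1) ^ 4 / K"
  have eq: "((\<bar>M\<bar> + 1)\<^sup>2)\<^sup>2 = K * r" using K by (simp add: r_def power_mult[symmetric])
  have "sqrt (K * r) = (\<bar>M\<bar> + 1)\<^sup>2" by (rule real_sqrt_unique[OF eq]) simp
  moreover have "sqrt ((\<bar>M\<bar> + 1)\<^sup>2) = \<bar>M\<bar> + 1" by (rule real_sqrt_unique) auto
  ultimately have "sqrt (sqrt (K * r)) = \<bar>M\<bar> + 1" by simp
  then have "2 * sqrt (sqrt (K * r)) > M" by linarith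
  moreover have "r \<ge> 0" using K by (simp add: r_def)
  ultimately show "\<exists>r\<ge>0. M < 2 * sqrt (sqrt (K * r))" by blast
qed

lemma classKL_beta:
  fixes G :: "real \<Rightarrow> real" and M :: real
  assumes Gc: "continuous_on {0..} G" and Gm: "\<And>s t. 0 \<le> s \<Longrightarrow> s \<le> t \<Longrightarrow> G s \<le> G t"
    and Glim: "filterlim G at_top at_top" and M: "M \<ge> 0"
  shows "class_KL (\<lambda>r t. 2 * sqrt (sqrt ((exp (- G t) + exp (- t)) * (r\<^sup>2 / 2 + (1 + M) * r ^ 4 / 4))))"
  unfolding class_KL_def
proof (intro conjI allI impI)
  have cG: "continuous_on ({0..} \<times> {0..}) (\<lambda>p. G (snd p))"
    by (rule continuous_on_compose2[OF Gc continuous_on_snd[OF continuous_on_id]]) auto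
  show "continuous_on ({0..} \<times> {0..}) (\<lambda>(r, t). 2 * sqrt (sqrt ((exp (- G t) + exp (- t)) * (r\<^sup>2 / 2 + (1 + M) * r ^ 4 / 4))))"
    unfolding case_prod_beta' by (intro continuous_intros cG) auto
  fix t :: real assume t: "0 \<le> t"
  have psi: "exp (- G t) + exp (- t) > 0" by (simp add: add_pos_pos)
  show "class_K (\<lambda>r. 2 * sqrt (sqrt ((exp (- G t) + exp (- t)) * (r\<^sup>2 / 2 + (1 + M) * r ^ 4 / 4))))"
    unfolding class_K_def
  proof (intro conjI allI impI strict_mono_onI)
    show "continuous_on {0..} (\<lambda>r. 2 * sqrt (sqrt ((exp (- G t) + exp (- t)) * (r\<^sup>2 / 2 + (1 + M) * r ^ 4 / 4))))"
      by (intro continuous_intros) auto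
    show "2 * sqrt (sqrt ((exp (- G t) + exp (- t)) * (0\<^sup>2 / 2 + (1 + M) * 0 ^ 4 / 4))) = 0" by simp
    fix r s :: real assume rs: "r \<in> {0..}" "s \<in> {0..}" "r < s"
    have "r\<^sup>2 < s\<^sup>2" using rs by (intro power_strict_mono) auto
    moreover have "r ^ 4 \<le> s ^ 4" using rs by (intro power_mono) auto
    then have "(1 + M) * r ^ 4 \<le> (1 + M) * s ^ 4" using M by (intro mult_left_mono) auto
    ultimately have "r\<^sup>2 / 2 + (1 + M) * r ^ 4 / 4 < s\<^sup>2 / 2 + (1 + M) * s ^ 4 / 4" by linarith
    then show "2 * sqrt (sqrt ((exp (- G t) + exp (- t)) * (r\<^sup>2 / 2 + (1 + M) * r ^ 4 / 4)))
       < 2 * sqrt (sqrt ((exp (- G t) + exp (- t)) * (s\<^sup>2 / 2 + (1 + M) * s ^ 4 / 4)))"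
      using psi by simp
  qed
next
  fix r :: real assume r: "r > 0"
  define W where "W = r\<^sup>2 / 2 + (1 + M) * r ^ 4 / 4"
  have W: "W > 0" unfolding W_def using r M by (intro add_pos_nonneg) auto
  show "continuous_on {0..} (\<lambda>t. 2 * sqrt (sqrt ((exp (- G t) + exp (- t)) * (r\<^sup>2 / 2 + (1 + M) * r ^ 4 / 4))))"
    by (intro continuous_intros Gc) auto
  show "2 * sqrt (sqrt ((exp (- G t) + exp (- t)) * (r\<^sup>2 / 2 + (1 + M) * r ^ 4 / 4)))
      < 2 * sqrt (sqrt ((exp (- G s) + exp (- s)) * (r\<^sup>2 / 2 + (1 + M) * r ^ 4 / 4)))" if st: "0 \<le> s" "s < t" for s t
  proof -
    have "exp (- G t) \<le> exp (- G s)" using Gm[of s t] st by simp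
    moreover have "exp (- t) < exp (- s)" using st by simp
    ultimately have "exp (- G t) + exp (- t) < exp (- G s) + exp (- s)" by linarith
    then have "(exp (- G t) + exp (- t)) * W < (exp (- G s) + exp (- s)) * W" using W by simp
    then show "2 * sqrt (sqrt ((exp (- G t) + exp (- t)) * (r\<^sup>2 / 2 + (1 + M) * r ^ 4 / 4)))
      < 2 * sqrt (sqrt ((exp (- G s) + exp (- s)) * (r\<^sup>2 / 2 + (1 + M) * r ^ 4 / 4)))"
      unfolding W_def by simp
  qed
  have e1: "((\<lambda>t. exp (- G t)) \<longlongrightarrow> 0) at_top"
    by (rule filterlim_compose[OF exp_at_bot]) (use Glim in \<open>simp add: filterlim_uminus_at_bot\<close>)
  have e2: "((\<lambda>t::real. exp (- t)) \<longlongrightarrow> 0) at_top"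
    by (rule filterlim_compose[OF exp_at_bot]) (simp add: filterlim_uminus_at_bot filterlim_ident)
  have "((\<lambda>t. 2 * sqrt (sqrt ((exp (- G t) + exp (- t)) * W))) \<longlongrightarrow> 2 * sqrt (sqrt ((0 + 0) * W))) at_top"
    by (intro tendsto_intros e1 e2)
  then show "((\<lambda>t. 2 * sqrt (sqrt ((exp (- G t) + exp (- t)) * (r\<^sup>2 / 2 + (1 + M) * r ^ 4 / 4)))) \<longlongrightarrow> 0) at_top"
    unfolding W_def by simp
qed

lemma lborel_abs:
  fixes f :: "real \<Rightarrow> real"
  assumes "set_integrable lborel S f"
  shows "f absolutely_integrable_on S"
  using set_borel_integral_eq_integral(1)[OF assms] set_borel_integral_eq_integral(1)[OF set_integrable_norm[OF assms]]
  unfolding absolutely_integrable_on_def by auto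

theorem proposition4p1:
  fixes g gt b h1 h1' g1 g2 h2 :: "real \<Rightarrow> real" and M :: real and m n :: nat
  assumes g_cont: "continuous_on {0..} g" and g_nn: "\<forall>t\<ge>0. g t \<ge> 0"
    and gt_cont: "continuous_on {0..} gt" and gt_nn: "\<forall>t\<ge>0. gt t \<ge> 0"
    and b_cont: "continuous_on {0..} b" and b_pos: "\<forall>t\<ge>0. b t > 0"
    and h1_deriv: "\<forall>t\<ge>0. (h1 has_real_derivative h1' t) (at t within {0..})"
    and h1'_cont: "continuous_on {0..} h1'"
    and M_pos: "M > 0" and h1_bnd: "\<forall>t\<ge>0. 0 \<le> h1 t \<and> h1 t \<le> M"
    and h1'_le: "\<forall>t\<ge>0. h1' t \<le> h1 t"
    and m_gt: "m > 3" and n_gt: "n > 1"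
    and g1_cont: "continuous_on {0..} g1" and g1_nn: "\<forall>t\<ge>0. g1 t \<ge> 0"
    and g2_cont: "continuous_on {0..} g2" and g2_nn: "\<forall>t\<ge>0. g2 t \<ge> 0"
    and h2_cont: "continuous_on {0..} h2" and h2_nn: "\<forall>t\<ge>0. h2 t \<ge> 0"
    and g1_ge: "\<forall>t\<ge>0. g1 t \<ge> max (g t) (gt t)"
    and g1_int: "filterlim (\<lambda>t. integral {0..t} g1) at_top at_top"
    and g2_ge: "\<forall>t\<ge>0. g2 t \<ge> 1 + g1 t"
    and h2_eq: "\<forall>t\<ge>0. h2 t = h1 t / (1 + h1 t)"
  shows "\<exists>R \<gamma>0 \<gamma> \<sigma>0 \<sigma> \<beta>. R > 0 \<and> class_K \<gamma>0 \<and> class_K \<gamma> \<and> class_Kinf \<sigma>0 \<and> class_Kinf \<sigma> \<and> class_KL \<beta> \<and>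
    (\<forall>(x0 :: real \<times> real) (d :: real \<Rightarrow> real).
       (\<forall>T>0. set_borel_measurable lborel {0..T} d \<and> set_integrable lborel {0..T} (\<lambda>s. (d s) ^ 4)) \<longrightarrow>
       (\<forall>t>0. set_integrable lborel {0..t} (\<lambda>s. \<gamma>0 \<bar>d s\<bar>) \<and>
              norm x0 + \<sigma>0 (LINT s:{0..t}|lborel. \<gamma>0 \<bar>d s\<bar>) \<le> R) \<longrightarrow>
       (\<forall>T>0. \<forall>x. car_solution
            (\<lambda>s (x1, x2). (- g1 s * x1 + g s * x1 ^ m - h1 s * x2 ^ 3,
                           h2 s * x1 - g2 s * x2 + gt s * x2 ^ n - b s * x1\<^sup>2 * x2 + d s))
            x0 T x \<longrightarrow>
          (\<forall>t\<in>{0..T}. set_integrable lborel {0..t} (\<lambda>s. \<gamma> \<bar>d s\<bar>) \<longrightarrow>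
             norm (x t) \<le> \<beta> (norm x0) t + \<sigma> (LINT s:{0..t}|lborel. \<gamma> \<bar>d s\<bar>))))"

proof -
  define G where "G = (\<lambda>t. integral {0..t} g1)"
  have Gc: "continuous_on {0..} G" and Gm: "\<And>s t. 0 \<le> s \<Longrightarrow> s \<le> t \<Longrightarrow> G s \<le> G t" and G0: "G 0 = 0"
    using G_props[OF g1_cont g1_nn] unfolding G_def by auto
  have Glim: "filterlim G at_top at_top" using g1_int unfolding G_def .
  have M0: "M \<ge> 0" using M_pos by simp
  define K where "K = (1 + M) / 4"
  have K: "K > 0" using M_pos by (simp add: K_def)
  define W where "W = (\<lambda>r::real. r\<^sup>2 / 2 + (1 + M) * r ^ 4 / 4)"
  define \<psi> where "\<psi> = (\<lambda>t. exp (- G t) + exp (- t))"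
  define \<beta> where "\<beta> = (\<lambda>r t. 2 * sqrt (sqrt (\<psi> t * W r)))"
  define \<sigma> where "\<sigma> = (\<lambda>s. 2 * sqrt (sqrt (K * s)))"
  define \<gamma> where "\<gamma> = (\<lambda>r::real. r ^ 4)"
  define R where "R = 1 / (100 * (2 + M))"
  have R: "R > 0" "R \<le> 1/200" using M0 by (auto simp: R_def field_simps)
  have W0: "W r \<ge> 0" for r using M0 by (simp add: W_def)
  have Wmono: "W r \<le> W s" if "0 \<le> r" "r \<le> s" for r s
  proof -
    have "r\<^sup>2 \<le> s\<^sup>2" "r ^ 4 \<le> s ^ 4" using that by (auto intro: power_mono)
    moreover have "(1 + M) * r ^ 4 \<le> (1 + M) * s ^ 4" using M0 \<open>r ^ 4 \<le> s ^ 4\<close> by (intro mult_left_mono) auto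
    ultimately show ?thesis unfolding W_def by linarith
  qed
  have Rsmall: "2 * sqrt (sqrt (2 * W R)) + R < 1/2"
  proof -
    have r2: "R\<^sup>2 \<le> (1/200)\<^sup>2" using R by (intro power_mono) auto
    have r3: "R ^ 3 \<le> (1/200) ^ 3" using R by (intro power_mono) auto
    have mr: "(1 + M) * R \<le> 1/100" using M0 by (simp add: R_def field_simps)
    have "(1 + M) * R ^ 4 = ((1 + M) * R) * R ^ 3" by (simp add: power_Suc algebra_simps numeral_eq_Suc)
    also have "\<dots> \<le> (1/100) * (1/200) ^ 3" using mr r3 R M0 by (intro mult_mono) auto
    finally have r4: "(1 + M) * R ^ 4 \<le> (1/100) * (1/200) ^ 3" .
    have "2 * W R = R\<^sup>2 + (1 + M) * R ^ 4 / 2" by (simp add: W_def)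
    also have "\<dots> < (1/64)\<^sup>2"
    proof -
      have n: "(1/200::real)\<^sup>2 = 1/40000" "(1/200::real) ^ 3 = 1/8000000" "(1/64::real)\<^sup>2 = 1/4096"
        by (simp_all add: power2_eq_square power3_eq_cube)
      show ?thesis using r2 r4 unfolding n by linarith
    qed
    finally have "sqrt (2 * W R) < 1/64" using real_sqrt_less_mono by fastforce
    moreover have "(1/8::real)\<^sup>2 = 1/64" by (simp add: power2_eq_square)
    ultimately have "sqrt (sqrt (2 * W R)) < sqrt ((1/8)\<^sup>2)" by (simp only: real_sqrt_less_iff)
    then have "sqrt (sqrt (2 * W R)) < 1/8" by (simp only: real_sqrt_abs)
    then show ?thesis using R by linarith
  qed
  have KL: "class_KL \<beta>" unfolding \<beta>_def \<psi>_def W_def using classKL_beta[OF Gc Gm Glim M0] by simp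
  have Ks: "class_Kinf \<sigma>" unfolding \<sigma>_def by (rule classKinf_sig[OF K])
  have Kg: "class_K \<gamma>" unfolding \<gamma>_def by (rule classK_pow4)
  have \<sigma>mono: "\<sigma> u \<le> \<sigma> v" if "0 \<le> u" "u \<le> v" for u v
  proof -
    have "0 \<le> K * u" using that K by simp
    moreover have "K * u \<le> K * v" using that K by (simp add: mult_left_mono)
    ultimately show ?thesis unfolding \<sigma>_def by simp
  qed
  have \<sigma>0: "\<sigma> u \<ge> 0" if "u \<ge> 0" for u unfolding \<sigma>_def using K that by simp
  have main: "norm (x t) \<le> \<beta> (norm x0) t + \<sigma> (LINT s:{0..t}|lborel. \<gamma> \<bar>d s\<bar>)"
    if dH: "\<forall>T>0. set_borel_measurable lborel {0..T} d \<and> set_integrable lborel {0..T} (\<lambda>s. (d s) ^ 4)"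
    and sm: "\<forall>t>0. set_integrable lborel {0..t} (\<lambda>s. \<gamma> \<bar>d s\<bar>) \<and> norm x0 + \<sigma> (LINT s:{0..t}|lborel. \<gamma> \<bar>d s\<bar>) \<le> R"
    and T: "T > 0"
    and sol: "car_solution (\<lambda>s (x1, x2). (- g1 s * x1 + g s * x1 ^ m - h1 s * x2 ^ 3,
                           h2 s * x1 - g2 s * x2 + gt s * x2 ^ n - b s * x1\<^sup>2 * x2 + d s)) x0 T x"
    and t: "t \<in> {0..T}"
    and intg: "set_integrable lborel {0..t} (\<lambda>s. \<gamma> \<bar>d s\<bar>)"
    for x0 :: "real \<times> real" and d :: "real \<Rightarrow> real" and T :: real and x :: "real \<Rightarrow> real \<times> real" and t :: real
  proof -
    define a where "a = (\<lambda>s. fst (x s))"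
    define c where "c = (\<lambda>s. snd (x s))"
    define w1 where "w1 = (\<lambda>s. - g1 s * a s + g s * a s ^ m - h1 s * c s ^ 3)"
    define w2 where "w2 = (\<lambda>s. h2 s * a s - g2 s * c s + gt s * c s ^ n - b s * (a s)\<^sup>2 * c s + d s)"
    have cx: "continuous_on {0..T} x" and x0: "x 0 = x0"
      and solt: "\<forall>t\<in>{0..T}.
        set_integrable lborel {0..t} (\<lambda>s. fst ((\<lambda>s (x1, x2). (- g1 s * x1 + g s * x1 ^ m - h1 s * x2 ^ 3,
                           h2 s * x1 - g2 s * x2 + gt s * x2 ^ n - b s * x1\<^sup>2 * x2 + d s)) s (x s))) \<and>
        set_integrable lborel {0..t} (\<lambda>s. snd ((\<lambda>s (x1, x2). (- g1 s * x1 + g s * x1 ^ m - h1 s * x2 ^ 3,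
                           h2 s * x1 - g2 s * x2 + gt s * x2 ^ n - b s * x1\<^sup>2 * x2 + d s)) s (x s))) \<and>
        fst (x t) = fst x0 + (LINT s:{0..t}|lborel. fst ((\<lambda>s (x1, x2). (- g1 s * x1 + g s * x1 ^ m - h1 s * x2 ^ 3,
                           h2 s * x1 - g2 s * x2 + gt s * x2 ^ n - b s * x1\<^sup>2 * x2 + d s)) s (x s))) \<and>
        snd (x t) = snd x0 + (LINT s:{0..t}|lborel. snd ((\<lambda>s (x1, x2). (- g1 s * x1 + g s * x1 ^ m - h1 s * x2 ^ 3,
                           h2 s * x1 - g2 s * x2 + gt s * x2 ^ n - b s * x1\<^sup>2 * x2 + d s)) s (x s)))"
      using sol unfolding car_solution_def by auto
    have fF: "(\<lambda>s. fst ((\<lambda>s (x1, x2). (- g1 s * x1 + g s * x1 ^ m - h1 s * x2 ^ 3,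
                           h2 s * x1 - g2 s * x2 + gt s * x2 ^ n - b s * x1\<^sup>2 * x2 + d s)) s (x s))) = w1" "(\<lambda>s. snd ((\<lambda>s (x1, x2). (- g1 s * x1 + g s * x1 ^ m - h1 s * x2 ^ 3,
                           h2 s * x1 - g2 s * x2 + gt s * x2 ^ n - b s * x1\<^sup>2 * x2 + d s)) s (x s))) = w2"
      by (auto simp: w1_def w2_def a_def c_def case_prod_beta)
    have sol2: "set_integrable lborel {0..s} w1 \<and> set_integrable lborel {0..s} w2
        \<and> a s = a 0 + (LINT r:{0..s}|lborel. w1 r) \<and> c s = c 0 + (LINT r:{0..s}|lborel. w2 r)"
      if "s \<in> {0..T}" for s
      using solt[rule_format, OF that] x0 unfolding fF by (simp add: a_def c_def)
    have ca: "continuous_on {0..T} a" unfolding a_def by (intro continuous_intros cx)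
    have cc: "continuous_on {0..T} c" unfolding c_def by (intro continuous_intros cx)
    have d4T: "(\<lambda>s. d s ^ 4) integrable_on {0..T}"
      using dH T by (auto intro: set_borel_integral_eq_integral(1))
    define D where "D = (\<lambda>t. integral {0..t} (\<lambda>s. d s ^ 4))"
    have d4: "(\<lambda>s. d s ^ 4) integrable_on {0..s}" if "s \<in> {0..T}" for s
      using integrable_on_subinterval[OF d4T] that by auto
    have Dmono: "D s \<le> D T" if "s \<in> {0..T}" for s
      unfolding D_def using that by (intro integral_subset_le d4 d4T) auto
    have D0: "D s \<ge> 0" if "s \<in> {0..T}" for s
      unfolding D_def using d4[OF that] by (intro integral_nonneg) auto
    have lint_eq: "(LINT s:{0..u}|lborel. \<gamma> \<bar>d s\<bar>) = D u" if "set_integrable lborel {0..u} (\<lambda>s. \<gamma> \<bar>d s\<bar>)" for u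
    proof -
      have "(LINT s:{0..u}|lborel. \<gamma> \<bar>d s\<bar>) = integral {0..u} (\<lambda>s. \<gamma> \<bar>d s\<bar>)"
        by (rule set_borel_integral_eq_integral(2)[OF that])
      then show ?thesis unfolding D_def \<gamma>_def by simp
    qed
    have smT: "norm x0 + \<sigma> (D T) \<le> R" using sm T lint_eq by auto
    have nx0: "norm x0 \<le> R" using smT \<sigma>0[OF D0[of T]] T by simp
    have est: "norm (x u) \<le> \<beta> (norm x0) u + \<sigma> (D u)"
      if u: "u \<in> {0..T}" and small: "\<forall>s\<in>{0..u}. norm (x s) \<le> 1/2" for u
    proof -
      have uT: "{0..u} \<subseteq> {0..T}" using u by auto
      have small': "\<bar>a s\<bar> \<le> 1/2 \<and> \<bar>c s\<bar> \<le> 1/2" if "s \<in> {0..u}" for s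
      proof -
        have "norm (x s) \<le> 1/2" using small that by auto
        moreover have "\<bar>a s\<bar> \<le> norm (x s)" "\<bar>c s\<bar> \<le> norm (x s)"
          unfolding a_def c_def using norm_fst_le[of "fst (x s)" "snd (x s)"] norm_snd_le[of "snd (x s)" "fst (x s)"] by auto
        ultimately show ?thesis by linarith
      qed
      have w2a: "w2 absolutely_integrable_on {0..u}"
        using sol2[OF u] by (intro lborel_abs) auto
      have L: "exp (integral {0..u} g1) * ((a u)\<^sup>2 / 2 + (1 + h1 u) * c u ^ 4 / 4)
        \<le> ((a 0)\<^sup>2 / 2 + (1 + h1 0) * c 0 ^ 4 / 4) + exp (integral {0..u} g1) * ((1 + M) / 4 * integral {0..u} (\<lambda>s. d s ^ 4))"
      proof (rule lyap_est[OF g_cont g_nn gt_cont gt_nn b_cont b_pos h1_deriv h1'_cont h1_bnd h1'_le m_gt n_gt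
            g1_cont g1_nn g1_ge g2_ge h2_eq, where t=u and a=a and c=c and d=d])
        show "0 \<le> u" using u by simp
        show "continuous_on {0..u} a" using continuous_on_subset[OF ca uT] .
        show "continuous_on {0..u} c" using continuous_on_subset[OF cc uT] .
        show "(\<lambda>s. h2 s * a s - g2 s * c s + gt s * c s ^ n - b s * (a s)\<^sup>2 * c s + d s) absolutely_integrable_on {0..u}"
          using w2a unfolding w2_def .
        show "a s = a 0 + integral {0..s} (\<lambda>s. - g1 s * a s + g s * a s ^ m - h1 s * c s ^ 3)" if "s \<in> {0..u}" for s
        proof -
          have s: "s \<in> {0..T}" using that uT by auto
          show ?thesis using sol2[OF s] set_borel_integral_eq_integral(2)[of "{0..s}" w1] unfolding w1_def by auto
        qed
        show "c s = c 0 + integral {0..s} (\<lambda>s. h2 s * a s - g2 s * c s + gt s * c s ^ n - b s * (a s)\<^sup>2 * c s + d s)" if "s \<in> {0..u}" for s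
        proof -
          have s: "s \<in> {0..T}" using that uT by auto
          show ?thesis using sol2[OF s] set_borel_integral_eq_integral(2)[of "{0..s}" w2] unfolding w2_def by auto
        qed
        show "(\<lambda>s. d s ^ 4) integrable_on {0..u}" using d4[OF u] .
        show "\<bar>a s\<bar> \<le> 1/2 \<and> \<bar>c s\<bar> \<le> 1/2" if "s \<in> {0..u}" for s using small'[OF that] .
      qed
      have nxu: "norm (x u) = sqrt ((a u)\<^sup>2 + (c u)\<^sup>2)"
        unfolding a_def c_def by (cases "x u") (simp add: norm_Pair)
      have V0: "0 \<le> (a 0)\<^sup>2 / 2 + (1 + h1 0) * c 0 ^ 4 / 4" using h1_bnd by simp
      have V0W: "(a 0)\<^sup>2 / 2 + (1 + h1 0) * c 0 ^ 4 / 4 \<le> W (norm x0)"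
      proof -
        have a0: "a 0 = fst x0" "c 0 = snd x0" unfolding a_def c_def x0 by simp_all
        have "norm (fst x0) \<le> norm (fst x0, snd x0)" by (rule norm_fst_le)
        then have na: "\<bar>a 0\<bar> \<le> norm x0" unfolding a0 by simp
        have "norm (snd x0) \<le> norm (fst x0, snd x0)" by (rule norm_snd_le)
        then have nc: "\<bar>c 0\<bar> \<le> norm x0" unfolding a0 by simp
        have "\<bar>a 0\<bar>\<^sup>2 \<le> (norm x0)\<^sup>2" using na by (intro power_mono) auto
        then have A: "(a 0)\<^sup>2 \<le> (norm x0)\<^sup>2" by simp
        have "\<bar>c 0\<bar> ^ 4 \<le> (norm x0) ^ 4" using nc by (intro power_mono) auto
        then have C: "c 0 ^ 4 \<le> norm x0 ^ 4" by simp
        have h10: "0 \<le> h1 0" "h1 0 \<le> M" using h1_bnd by auto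
        have "(1 + h1 0) * c 0 ^ 4 \<le> (1 + M) * c 0 ^ 4" using h10 by (intro mult_right_mono) auto
        also have "\<dots> \<le> (1 + M) * norm x0 ^ 4" using C M0 by (intro mult_left_mono) auto
        finally have "(1 + h1 0) * c 0 ^ 4 \<le> (1 + M) * norm x0 ^ 4" .
        moreover note A
        ultimately show ?thesis unfolding W_def by linarith
      qed
      have psi: "1 / exp (G u) \<le> \<psi> u" unfolding \<psi>_def by (simp add: exp_minus inverse_eq_divide)
      have KD: "K * D u \<ge> 0" using K D0[OF u] by simp
      have "sqrt ((a u)\<^sup>2 + (c u)\<^sup>2) \<le> 2 * sqrt (sqrt (\<psi> u * W (norm x0))) + 2 * sqrt (sqrt (K * D u))"
      proof (rule norm_est[OF _ _ _ _ V0 V0W psi KD])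
        show "\<bar>a u\<bar> \<le> 1/2" using small'[of u] u by auto
        show "0 \<le> h1 u" using h1_bnd u by auto
        show "0 < exp (G u)" by simp
        show "exp (G u) * ((a u)\<^sup>2 / 2 + (1 + h1 u) * c u ^ 4 / 4)
          \<le> (a 0)\<^sup>2 / 2 + (1 + h1 0) * c 0 ^ 4 / 4 + exp (G u) * (K * D u)"
          using L unfolding G_def K_def D_def .
      qed
      then show ?thesis unfolding nxu \<beta>_def \<sigma>_def .
    qed
    have allsmall: "\<forall>s\<in>{0..T}. norm (x s) < 1/2"
    proof (rule bootstrap)
      show "continuous_on {0..T} (\<lambda>s. norm (x s))" by (intro continuous_intros cx)
      show "norm (x 0) < 1/2" using x0 nx0 R by simp
      show "0 \<le> T" using T by simp
      fix u assume u: "u \<in> {0..T}" and sm': "\<forall>s\<in>{0..u}. norm (x s) \<le> 1/2"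
      have "norm (x u) \<le> \<beta> (norm x0) u + \<sigma> (D u)" by (rule est[OF u sm'])
      also have "\<beta> (norm x0) u \<le> 2 * sqrt (sqrt (2 * W R))"
      proof -
        have "G u \<ge> 0" using Gm[of 0 u] G0 u by simp
        then have "exp (- G u) \<le> 1" by simp
        moreover have "exp (- u) \<le> 1" using u by simp
        ultimately have "\<psi> u \<le> 2" unfolding \<psi>_def by linarith
        moreover have "\<psi> u \<ge> 0" unfolding \<psi>_def by (simp add: add_nonneg_nonneg)
        moreover have "W (norm x0) \<le> W R" using nx0 by (intro Wmono) auto
        ultimately have "\<psi> u * W (norm x0) \<le> 2 * W R" using W0 by (intro mult_mono) auto
        then show ?thesis unfolding \<beta>_def by simp
      qed
      also have "\<sigma> (D u) \<le> R"
        using \<sigma>mono[OF D0[OF u] Dmono[OF u]] smT norm_ge_zero[of x0] by linarith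
      finally show "norm (x u) < 1/2" using Rsmall by linarith
    qed
    have "norm (x t) \<le> \<beta> (norm x0) t + \<sigma> (D t)"
      using est[OF t] allsmall t by (auto simp: less_imp_le)
    then show ?thesis using lint_eq[OF intg] by simp
  qed
  show ?thesis
    apply (rule exI[of _ R], rule exI[of _ \<gamma>], rule exI[of _ \<gamma>], rule exI[of _ \<sigma>], rule exI[of _ \<sigma>], rule exI[of _ \<beta>])
    using R(1) KL Ks Kg main by blast
qed

end
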